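(* Let $\mathcal{H}$ be a real Hilbert space, $\rho\in\mathbb{R}$, and let $\mathcal{A}:\mathcal{H}\to 2^{\mathcal{H}}$ be a maximally $\rho$-comonotone operator with $\mathrm{zer}\,\mathcal{A}:=\{x:0\in\mathcal{A}x\}\neq\emptyset$. Let $\eta>\max\{-2\rho,0\}$, $\beta>0$, $\alpha>\gamma+2$ and $\gamma>\frac{\beta}{2(\rho+\eta)}$. Given $x_0,x_{-1}\in\mathcal{H}$, define for $n\ge 1$ $$y_n=x_n+\Big(1-\frac{\alpha}{n}\Big)(x_n-x_{n-1}),\qquad z_n=x_n+\frac{n}{\gamma}(x_n-x_{n-1}),\qquad x_{n+1}=y_n-\frac{\beta}{n}\mathcal{A}_\eta(z_n).$$ Then: (i) $\sum_{n=1}^{+\infty} n\|x_n-x_{n-1}\|^2<+\infty$, $\sum_{n=1}^{+\infty} n\|\mathcal{A}_{\eta}(z_{n})\|^2<+\infty$ and $\sum_{n=1}^{+\infty} n^2\|\mathcal{A}_{\eta}(z_{n})-\mathcal{A}_{\eta}(z_{n+1})\|^2<+\infty$; (ii) $\|x_n-x_{n-1}\|=o(1/n)$ and $\|\mathcal{A}_{\eta}(z_n)\|=o(1/n)$ as $n\to+\infty$; (iii) $x_n$ converges weakly, as $n\to+\infty$, to an element of $\mathrm{zer}\,\mathcal{A}$.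
   Context: An operator $\mathcal{A}:\mathcal{H}\to 2^{\mathcal{H}}$ is $\rho$-comonotone if $\langle x-y,u-v\rangle\ge \rho\|u-v\|^2$ for all $(x,u),(y,v)$ in its graph; it is maximally $\rho$-comonotone if it is $\rho$-comonotone and no other $\rho$-comonotone operator has a graph properly containing its graph. The resolvent is $J^{\mathcal{A}}_\eta=(\mathrm{Id}+\eta\mathcal{A})^{-1}$ and the Yosida regularization is $\mathcal{A}_\eta=\frac{1}{\eta}(\mathrm{Id}-J^{\mathcal{A}}_\eta)$ (single-valued and defined on all of $\mathcal{H}$ when $\eta>\max\{-2\rho,0\}$). *)

theory Defs
  imports "HOL-Analysis.Analysis" "HOL-Library.Landau_Symbols"
begin

definition comonotone :: "real \<Rightarrow> ('a::real_inner \<Rightarrow> 'a set) \<Rightarrow> bool" where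
  "comonotone \<rho> A \<longleftrightarrow>
     (\<forall>x u y v. u \<in> A x \<longrightarrow> v \<in> A y \<longrightarrow> inner (x - y) (u - v) \<ge> \<rho> * (norm (u - v))\<^sup>2)"

definition max_comonotone :: "real \<Rightarrow> ('a::real_inner \<Rightarrow> 'a set) \<Rightarrow> bool" where
  "max_comonotone \<rho> A \<longleftrightarrow> comonotone \<rho> A \<and>
     (\<forall>B. comonotone \<rho> B \<and> (\<forall>x. A x \<subseteq> B x) \<longrightarrow> B = A)"

definition zer :: "('a::real_vector \<Rightarrow> 'a set) \<Rightarrow> 'a set" where
  "zer A = {x. 0 \<in> A x}"

text \<open>Resolvent J = (Id + eta A)^{-1}: p is in J x iff x is in p + eta * A p.
  It is single-valued and everywhere defined in the situation of the theorem, so it is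
  defined via THE.\<close>
definition resolvent :: "('a::real_vector \<Rightarrow> 'a set) \<Rightarrow> real \<Rightarrow> 'a \<Rightarrow> 'a" where
  "resolvent A \<eta> x = (THE p. \<exists>u \<in> A p. x = p + \<eta> *\<^sub>R u)"

definition yosida :: "('a::real_vector \<Rightarrow> 'a set) \<Rightarrow> real \<Rightarrow> 'a \<Rightarrow> 'a" where
  "yosida A \<eta> x = (1 / \<eta>) *\<^sub>R (x - resolvent A \<eta> x)"

definition weakly_converges :: "(nat \<Rightarrow> 'a::real_inner) \<Rightarrow> 'a \<Rightarrow> bool" where
  "weakly_converges x l \<longleftrightarrow> (\<forall>y. (\<lambda>n. inner (x n) y) \<longlonglongrightarrow> inner l y)"

end

theory Submission
  imports Defs "HOL-Real_Asymp.Real_Asymp"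
begin

lemma double_sum_identity:
  fixes y :: "'i \<Rightarrow> 'a::real_inner"
  assumes S: "finite S" and u1: "sum u S = 1"
  shows "(\<Sum>i\<in>S. \<Sum>j\<in>S. u i * u j * (norm (y i - y j))\<^sup>2)
       = 2 * (\<Sum>i\<in>S. u i * (norm (y i - z))\<^sup>2) - 2 * (norm ((\<Sum>i\<in>S. u i *\<^sub>R y i) - z))\<^sup>2"
proof -
  have e1: "(norm (y i - y j))\<^sup>2 = (norm (y i - z))\<^sup>2 + (norm (y j - z))\<^sup>2 - 2 * inner (y i - z) (y j - z)" for i j
  proof -
    have "y i - y j = (y i - z) - (y j - z)" by simp
    then have "(norm (y i - y j))\<^sup>2 = (norm ((y i - z) - (y j - z)))\<^sup>2" by metis
    also have "\<dots> = (norm (y i - z))\<^sup>2 + (norm (y j - z))\<^sup>2 - 2 * inner (y i - z) (y j - z)"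
      by (simp add: power2_norm_eq_inner inner_diff_left inner_diff_right inner_commute)
    finally show ?thesis .
  qed
  have c: "(\<Sum>i\<in>S. u i *\<^sub>R y i) - z = (\<Sum>i\<in>S. u i *\<^sub>R (y i - z))"
    using u1 by (simp add: scaleR_diff_right sum_subtractf scaleR_sum_left[symmetric])
  have "(norm ((\<Sum>i\<in>S. u i *\<^sub>R y i) - z))\<^sup>2 = (\<Sum>i\<in>S. \<Sum>j\<in>S. u i * u j * inner (y i - z) (y j - z))"
    unfolding c power2_norm_eq_inner inner_sum_left inner_sum_right
    apply (simp add: sum_distrib_left mult.assoc)
    apply (subst sum.swap)
    apply (simp add: inner_commute mult.left_commute)
    done
  moreover have "(\<Sum>i\<in>S. \<Sum>j\<in>S. u i * u j * (norm (y i - y j))\<^sup>2) =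
     (\<Sum>i\<in>S. \<Sum>j\<in>S. u i * u j * (norm (y i - z))\<^sup>2) + (\<Sum>i\<in>S. \<Sum>j\<in>S. u i * u j * (norm (y j - z))\<^sup>2)
     - 2 * (\<Sum>i\<in>S. \<Sum>j\<in>S. u i * u j * inner (y i - z) (y j - z))"
    unfolding e1 by (simp add: algebra_simps sum.distrib sum_subtractf sum_distrib_left)
  moreover have "(\<Sum>i\<in>S. \<Sum>j\<in>S. u i * u j * (norm (y i - z))\<^sup>2) = (\<Sum>i\<in>S. u i * (norm (y i - z))\<^sup>2)"
    by (simp add: mult.commute mult.left_commute sum_distrib_left[symmetric] sum_distrib_right[symmetric] u1)
  moreover have "(\<Sum>i\<in>S. \<Sum>j\<in>S. u i * u j * (norm (y j - z))\<^sup>2) = (\<Sum>i\<in>S. u i * (norm (y i - z))\<^sup>2)"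
    by (subst sum.swap) (simp add: mult.commute mult.left_commute sum_distrib_left[symmetric] sum_distrib_right[symmetric] u1)
  ultimately show ?thesis by simp
qed

lemma continuous_on_Max_finite:
  assumes "finite F" "F \<noteq> {}" "\<And>i. i \<in> F \<Longrightarrow> continuous_on K (f i)"
  shows "continuous_on K (\<lambda>n. Max ((\<lambda>i. f i n) ` F) :: real)"
  using assms
proof (induction F rule: finite_ne_induct)
  case (singleton x) then show ?case by simp
next
  case (insert x F)
  have eq: "(\<lambda>n. Max ((\<lambda>i. f i n) ` insert x F)) = (\<lambda>n. max (f x n) (Max ((\<lambda>i. f i n) ` F)))"
    using insert by (simp add: Max_insert)
  show ?case unfolding eq using insert by (intro continuous_on_max) auto
qed

lemma proj_char:
  fixes K :: "'a::real_inner set"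
  assumes "convex K" "p \<in> K" "\<And>q. q \<in> K \<Longrightarrow> dist n p \<le> dist n q" "q \<in> K"
  shows "inner (n - p) (q - p) \<le> 0"
proof (rule ccontr)
  assume c: "\<not> ?thesis"
  define c0 where "c0 = inner (n - p) (q - p)"
  define M where "M = (norm (q - p))\<^sup>2 + 1"
  have c0: "c0 > 0" using c c0_def by simp
  have M: "M > 0" unfolding M_def by (simp add: add_nonneg_pos)
  define t where "t = min 1 (c0 / M)"
  have t: "t > 0" "t \<le> 1" using c0 M by (auto simp: t_def)
  have "p + t *\<^sub>R (q - p) \<in> K"
  proof -
    have "p + t *\<^sub>R (q - p) = (1 - t) *\<^sub>R p + t *\<^sub>R q" by (simp add: algebra_simps)
    then show ?thesis using assms(1,2,4) t by (simp add: convex_def)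
  qed
  then have "dist n p \<le> dist n (p + t *\<^sub>R (q - p))" using assms(3) by blast
  then have "(norm (n - p))\<^sup>2 \<le> (norm ((n - p) - t *\<^sub>R (q - p)))\<^sup>2"
    by (simp add: dist_norm algebra_simps)
  also have "\<dots> = (norm (n - p))\<^sup>2 - 2 * t * c0 + t\<^sup>2 * (norm (q - p))\<^sup>2"
    unfolding c0_def power2_norm_eq_inner
    by (simp add: inner_diff_left inner_diff_right inner_commute algebra_simps power2_eq_square)
  finally have "2 * t * c0 \<le> t\<^sup>2 * (norm (q - p))\<^sup>2" by simp
  then have "2 * c0 \<le> t * (norm (q - p))\<^sup>2" using t by (simp add: power2_eq_square mult.assoc)
  also have "\<dots> \<le> t * M" using t by (intro mult_left_mono) (auto simp: M_def)
  also have "\<dots> \<le> c0" using M by (auto simp: t_def min_def field_simps)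
  finally show False using c0 by simp
qed

lemma kirszbraun_finite:
  fixes a b :: "'i \<Rightarrow> 'a::real_inner"
  assumes F: "finite F" and lip: "\<And>i j. i \<in> F \<Longrightarrow> j \<in> F \<Longrightarrow> norm (b i - b j) \<le> norm (a i - a j)"
  shows "\<exists>n. \<forall>i\<in>F. norm (n - b i) \<le> norm (x - a i)"
proof (cases "F = {}")
  case True then show ?thesis by auto
next
  case Fne: False
  show ?thesis
  proof (cases "\<exists>i\<in>F. x = a i")
    case True
    then obtain i0 where i0: "i0 \<in> F" "x = a i0" by auto
    show ?thesis
      by (rule exI[of _ "b i0"]) (use i0 lip in \<open>auto simp: norm_minus_commute\<close>)
  next
    case False
    define r where "r i = norm (x - a i)" for i
    have rpos: "i \<in> F \<Longrightarrow> r i > 0" for i using False by (auto simp: r_def)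
    define \<phi> where "\<phi> n = Max ((\<lambda>i. norm (n - b i) / r i) ` F)" for n
    define K where "K = convex hull (b ` F)"
    have Kc: "compact K" unfolding K_def using F by (intro finite_imp_compact_convex_hull) simp
    have Kne: "K \<noteq> {}" using Fne by (simp add: K_def)
    have Kcvx: "convex K" by (simp add: K_def convex_convex_hull)
    have cont: "continuous_on K \<phi>" unfolding \<phi>_def
      by (rule continuous_on_Max_finite[OF F Fne]) (intro continuous_intros, use rpos in force)
    obtain n0 where n0: "n0 \<in> K" "\<And>n. n \<in> K \<Longrightarrow> \<phi> n0 \<le> \<phi> n"
      using continuous_attains_inf[OF Kc Kne cont] by auto
    define lam where "lam = \<phi> n0"
    have le: "norm (n0 - b i) \<le> lam * r i" if i: "i \<in> F" for i
    proof -
      have "norm (n0 - b i) / r i \<le> lam" unfolding lam_def \<phi>_def using F i by (intro Max_ge) auto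
      then show ?thesis using rpos[OF i] by (simp add: field_simps)
    qed
    have "lam \<le> 1"
    proof (rule ccontr)
      assume "\<not> lam \<le> 1"
      then have lam1: "lam > 1" by simp
      define I where "I = {i\<in>F. norm (n0 - b i) = lam * r i}"
      have "lam \<in> (\<lambda>i. norm (n0 - b i) / r i) ` F" unfolding lam_def \<phi>_def using F Fne by (intro Max_in) auto
      then obtain i1 where i1: "i1 \<in> F" "lam = norm (n0 - b i1) / r i1" by auto
      have "i1 \<in> I" using i1 rpos[OF i1(1)] by (auto simp: I_def field_simps)
      then have Ine: "I \<noteq> {}" by auto
      have IF: "I \<subseteq> F" by (auto simp: I_def)
      have Ifin: "finite I" using IF F finite_subset by blast
      define KI where "KI = convex hull (b ` I)"
      have KIc: "compact KI" unfolding KI_def using Ifin by (intro finite_imp_compact_convex_hull) simp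
      have KIne: "KI \<noteq> {}" using Ine by (simp add: KI_def)
      have KIK: "KI \<subseteq> K" unfolding KI_def K_def using IF by (intro hull_mono image_mono)
      have "continuous_on KI (dist n0)" by (intro continuous_intros)
      then obtain p where p: "p \<in> KI" "\<And>q. q \<in> KI \<Longrightarrow> dist n0 p \<le> dist n0 q"
        using continuous_attains_inf[OF KIc KIne, of "dist n0"] by auto
      have proj: "inner (n0 - p) (q - p) \<le> 0" if "q \<in> KI" for q
        using proj_char[of KI p n0 q] p that by (auto simp: KI_def convex_convex_hull)
      show False
      proof (cases "p = n0")
        case False
        define dd where "dd = p - n0"
        have ddpos: "norm dd > 0" using False by (simp add: dd_def)
        have act: "norm (n0 + t *\<^sub>R dd - b i) < lam * r i" if i: "i \<in> I" and t: "t > 0" "t < 2" for i t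
        proof -
          have bi: "b i \<in> KI" unfolding KI_def using i by (intro hull_inc) auto
          have "inner (n0 - b i) dd = - (norm dd)\<^sup>2 + inner (b i - p) (n0 - p)"
            unfolding dd_def power2_norm_eq_inner
            by (simp add: inner_diff_left inner_diff_right inner_commute algebra_simps)
          also have "\<dots> \<le> - (norm dd)\<^sup>2" using proj[OF bi] by (simp add: inner_commute)
          finally have ip: "inner (n0 - b i) dd \<le> - (norm dd)\<^sup>2" .
          have "(norm (n0 + t *\<^sub>R dd - b i))\<^sup>2 = (norm (n0 - b i))\<^sup>2 + 2 * t * inner (n0 - b i) dd + t\<^sup>2 * (norm dd)\<^sup>2"
            unfolding power2_norm_eq_inner
            by (simp add: inner_diff_left inner_diff_right inner_add_left inner_add_right inner_commute algebra_simps power2_eq_square)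
          also have "\<dots> \<le> (norm (n0 - b i))\<^sup>2 - 2 * t * (norm dd)\<^sup>2 + t\<^sup>2 * (norm dd)\<^sup>2"
            using mult_left_mono[OF ip, of t] t by simp
          also have "\<dots> < (norm (n0 - b i))\<^sup>2"
          proof -
            have "t * (t - 2) < 0" using t by (simp add: mult_pos_neg)
            then have "t * (t - 2) * (norm dd)\<^sup>2 < 0" using ddpos by (simp add: mult_neg_pos)
            then show ?thesis by (simp add: algebra_simps power2_eq_square)
          qed
          also have "\<dots> = (lam * r i)\<^sup>2" using i by (simp add: I_def)
          finally have "(norm (n0 + t *\<^sub>R dd - b i))\<^sup>2 < (lam * r i)\<^sup>2" .
          then show ?thesis
          proof (rule power2_less_imp_less)
            show "0 \<le> lam * r i" using lam1 rpos[of i] i IF by auto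
          qed
        qed
        have inact: "eventually (\<lambda>t. norm (n0 + t *\<^sub>R dd - b i) < lam * r i) (at_right 0)" if i: "i \<in> F - I" for i
        proof -
          have lt: "norm (n0 - b i) < lam * r i" using le[of i] i by (auto simp: I_def)
          have "((\<lambda>t. norm (n0 + t *\<^sub>R dd - b i)) \<longlongrightarrow> norm (n0 + 0 *\<^sub>R dd - b i)) (at_right 0)"
            by (intro tendsto_intros)
          then have "((\<lambda>t. norm (n0 + t *\<^sub>R dd - b i)) \<longlongrightarrow> norm (n0 - b i)) (at_right 0)" by simp
          from order_tendstoD(2)[OF this lt] show ?thesis .
        qed
        have ev: "eventually (\<lambda>t. (\<forall>i\<in>F. norm (n0 + t *\<^sub>R dd - b i) < lam * r i) \<and> t > 0 \<and> t < 1) (at_right (0::real))"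
        proof -
          have e1: "eventually (\<lambda>t. t > 0 \<and> t < (1::real)) (at_right 0)"
            by (simp add: eventually_at_right_field) (auto intro!: exI[of _ 1])
          have e2: "eventually (\<lambda>t. \<forall>i\<in>F - I. norm (n0 + t *\<^sub>R dd - b i) < lam * r i) (at_right 0)"
            using F inact by (intro eventually_ball_finite) auto
          show ?thesis using e1 e2
          proof eventually_elim
            case (elim t)
            show ?case
            proof (intro conjI ballI)
              fix i assume "i \<in> F"
              show "norm (n0 + t *\<^sub>R dd - b i) < lam * r i"
              proof (cases "i \<in> I")
                case True then show ?thesis using act[of i t] elim by simp
              next
                case False then show ?thesis using elim \<open>i \<in> F\<close> by simp
              qed
            qed (use elim in auto)
          qed
        qed
        obtain t where t: "\<forall>i\<in>F. norm (n0 + t *\<^sub>R dd - b i) < lam * r i" "t > 0" "t < 1"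
          using eventually_happens[OF ev] by auto
        have ntK: "n0 + t *\<^sub>R dd \<in> K"
        proof -
          have "n0 + t *\<^sub>R dd = (1 - t) *\<^sub>R n0 + t *\<^sub>R p" by (simp add: dd_def algebra_simps)
          moreover have "p \<in> K" using p KIK by auto
          ultimately show ?thesis using Kcvx n0(1) t by (simp add: convex_def)
        qed
        have "\<phi> (n0 + t *\<^sub>R dd) < lam"
          unfolding \<phi>_def using F Fne t(1) rpos by (subst Max_less_iff) (auto simp: field_simps)
        with n0(2)[OF ntK] show False by (simp add: lam_def)
      next
        case True
        define S where "S = b ` I"
        have Sfin: "finite S" using Ifin by (simp add: S_def)
        have "n0 \<in> convex hull S" using p(1) True unfolding KI_def S_def by simp
        then obtain u where u: "\<forall>y\<in>S. 0 \<le> u y" "sum u S = 1" "(\<Sum>y\<in>S. u y *\<^sub>R y) = n0"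
          unfolding convex_hull_finite[OF Sfin] by blast
        define \<sigma> where "\<sigma> y = (SOME i. i \<in> I \<and> b i = y)" for y
        have \<sigma>: "\<sigma> y \<in> I \<and> b (\<sigma> y) = y" if "y \<in> S" for y
          unfolding \<sigma>_def by (rule someI_ex) (use that in \<open>auto simp: S_def\<close>)
        define a' where "a' y = a (\<sigma> y)" for y
        have actS: "norm (n0 - y) = lam * norm (x - a' y)" if "y \<in> S" for y
          using \<sigma>[OF that] by (auto simp: I_def a'_def r_def)
        have lipS: "norm (y - y') \<le> norm (a' y - a' y')" if "y \<in> S" "y' \<in> S" for y y'
          using \<sigma>[OF that(1)] \<sigma>[OF that(2)] lip[of "\<sigma> y" "\<sigma> y'"] IF by (auto simp: a'_def)
        have id1: "(\<Sum>i\<in>S. \<Sum>j\<in>S. u i * u j * (norm (i - j))\<^sup>2) = 2 * (\<Sum>i\<in>S. u i * (norm (i - n0))\<^sup>2)"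
          using double_sum_identity[OF Sfin u(2), of "\<lambda>y. y" n0] u(3) by simp
        have id2: "(\<Sum>i\<in>S. \<Sum>j\<in>S. u i * u j * (norm (a' i - a' j))\<^sup>2) \<le> 2 * (\<Sum>i\<in>S. u i * (norm (a' i - x))\<^sup>2)"
          using double_sum_identity[OF Sfin u(2), of a' x] by simp
        have mono: "(\<Sum>i\<in>S. \<Sum>j\<in>S. u i * u j * (norm (i - j))\<^sup>2) \<le> (\<Sum>i\<in>S. \<Sum>j\<in>S. u i * u j * (norm (a' i - a' j))\<^sup>2)"
          using u(1) lipS by (intro sum_mono mult_left_mono power_mono mult_nonneg_nonneg) auto
        have "(\<Sum>i\<in>S. u i * (norm (i - n0))\<^sup>2) = lam\<^sup>2 * (\<Sum>i\<in>S. u i * (norm (x - a' i))\<^sup>2)"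
          unfolding sum_distrib_left
          by (intro sum.cong refl) (simp add: norm_minus_commute[of _ n0] actS power_mult_distrib)
        then have main: "lam\<^sup>2 * (\<Sum>i\<in>S. u i * (norm (x - a' i))\<^sup>2) \<le> (\<Sum>i\<in>S. u i * (norm (x - a' i))\<^sup>2)"
          using id1 id2 mono by (simp add: norm_minus_commute[of _ x])
        have "\<exists>y\<in>S. u y > 0"
        proof (rule ccontr)
          assume "\<not> ?thesis"
          then have "\<forall>y\<in>S. u y = 0" using u(1) by force
          then show False using u(2) by simp
        qed
        then obtain y0 where y0: "y0 \<in> S" "u y0 > 0" by auto
        have "x \<noteq> a' y0" using \<sigma>[OF y0(1)] False IF by (auto simp: a'_def)
        then have "0 < u y0 * (norm (x - a' y0))\<^sup>2" using y0 by simp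
        then have Tpos: "0 < (\<Sum>i\<in>S. u i * (norm (x - a' i))\<^sup>2)"
          using Sfin y0 u(1) by (intro sum_pos2[where i=y0]) auto
        from main Tpos have "lam\<^sup>2 \<le> 1" by (simp add: mult_le_cancel_right1)
        moreover have "1 < lam\<^sup>2" using lam1 by (simp add: one_less_power)
        ultimately show False by simp
      qed
    qed
    show ?thesis
    proof (intro exI ballI)
      fix i assume i: "i \<in> F"
      have "norm (n0 - b i) \<le> lam * r i" by (rule le[OF i])
      also have "\<dots> \<le> r i" using \<open>lam \<le> 1\<close> rpos[OF i] by (simp add: mult_left_le_one_le)
      finally show "norm (n0 - b i) \<le> norm (x - a i)" by (simp add: r_def)
    qed
  qed
qed

lemma parallelogram_bound:
  fixes y1 y2 :: "'a::real_inner"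
  assumes "norm ((1/2) *\<^sub>R (y1 + y2)) \<ge> m" "m \<ge> 0"
  shows "(norm (y1 - y2))\<^sup>2 \<le> 2 * (norm y1)\<^sup>2 + 2 * (norm y2)\<^sup>2 - 4 * m\<^sup>2"
proof -
  have par: "(norm (y1 - y2))\<^sup>2 + (norm (y1 + y2))\<^sup>2 = 2 * (norm y1)\<^sup>2 + 2 * (norm y2)\<^sup>2"
    unfolding power2_norm_eq_inner
    by (simp add: inner_diff_left inner_diff_right inner_add_left inner_add_right inner_commute algebra_simps)
  have "norm (y1 + y2) = 2 * norm ((1/2) *\<^sub>R (y1 + y2))" by simp
  then have "norm (y1 + y2) \<ge> 2 * m" using assms by simp
  then have "(norm (y1 + y2))\<^sup>2 \<ge> (2 * m)\<^sup>2" using assms(2) by (intro power_mono) auto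
  then show ?thesis using par by (simp add: power_mult_distrib)
qed

lemma fip_hilbert:
  fixes K :: "'i \<Rightarrow> 'a::{real_inner,complete_space} set"
  assumes S0b: "bounded S0" and S0c: "closed S0" and S0v: "convex S0"
    and KI: "\<And>i. i \<in> I \<Longrightarrow> closed (K i) \<and> convex (K i)"
    and fin: "\<And>F. finite F \<Longrightarrow> F \<subseteq> I \<Longrightarrow> S0 \<inter> \<Inter>(K ` F) \<noteq> {}"
  shows "S0 \<inter> \<Inter>(K ` I) \<noteq> {}"
proof -
  define S where "S F = S0 \<inter> \<Inter>(K ` F)" for F
  define m where "m F = Inf (norm ` S F)" for F
  obtain R where R: "\<And>y. y \<in> S0 \<Longrightarrow> norm y \<le> R" using S0b bounded_iff by blast
  have Sne: "S F \<noteq> {}" if "finite F" "F \<subseteq> I" for F using fin[OF that] by (simp add: S_def)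
  have Sconv: "convex (S F)" if "F \<subseteq> I" for F
    unfolding S_def using KI that S0v by (intro convex_Int convex_Inter) auto
  have Santi: "S G \<subseteq> S F" if "F \<subseteq> G" for F G using that by (auto simp: S_def)
  have bdd: "bdd_below (norm ` S F)" for F by (rule bdd_belowI[of _ 0]) auto
  have m_le: "m F \<le> norm y" if "y \<in> S F" for F y unfolding m_def using that bdd by (intro cInf_lower) auto
  have m_ge0: "m F \<ge> 0" if "finite F" "F \<subseteq> I" for F
    unfolding m_def using Sne[OF that] by (intro cInf_greatest) auto
  have m_R: "m F \<le> R" if fF: "finite F" "F \<subseteq> I" for F
  proof -
    obtain y where "y \<in> S F" using Sne[OF fF] by auto
    then show ?thesis using m_le[of y F] R[of y] by (auto simp: S_def)
  qed
  have m_approx: "\<exists>y\<in>S F. norm y < m F + e" if fF: "finite F" "F \<subseteq> I" "e > 0" for F e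
  proof -
    have "Inf (norm ` S F) < m F + e" using fF(3) by (simp add: m_def)
    then obtain t where "t \<in> norm ` S F" "t < m F + e"
      using cInf_lessD[of "norm ` S F"] Sne[OF fF(1,2)] by blast
    then show ?thesis by auto
  qed
  have m_mono: "m F \<le> m G" if "F \<subseteq> G" "finite G" "G \<subseteq> I" for F G
    unfolding m_def using Sne[OF that(2,3)] Santi[OF that(1)] bdd
    by (intro cInf_superset_mono) auto
  have mid: "m F \<le> norm ((1/2) *\<^sub>R (y1 + y2))" if "y1 \<in> S F" "y2 \<in> S F" "F \<subseteq> I" for F y1 y2
  proof -
    have "(1/2) *\<^sub>R (y1 + y2) = (1 - 1/2) *\<^sub>R y1 + (1/2) *\<^sub>R y2" by (simp add: algebra_simps)
    then have "(1/2) *\<^sub>R (y1 + y2) \<in> S F" using Sconv[OF that(3)] that(1,2)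
      by (metis (no_types, lifting) convex_def le_divide_eq_1_pos less_eq_real_def one_add_one zero_less_divide_1_iff zero_less_two add_diff_cancel_left' diff_add_cancel field_sum_of_halves)
    then show ?thesis by (rule m_le)
  qed
  define Ms where "Ms = {m F | F. finite F \<and> F \<subseteq> I}"
  define M where "M = Sup Ms"
  have Msne: "Ms \<noteq> {}" unfolding Ms_def by auto
  have Msbdd: "bdd_above Ms" unfolding Ms_def using m_R by (intro bdd_aboveI[of _ R]) auto
  have m_M: "m F \<le> M" if "finite F" "F \<subseteq> I" for F
    unfolding M_def using that Msbdd by (intro cSup_upper) (auto simp: Ms_def)
  have M0: "M \<ge> 0" using m_M[of "{}"] m_ge0[of "{}"] by simp
  define e where "e k = inverse (real (Suc k))" for k
  have epos: "e k > 0" for k by (simp add: e_def)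
  have e_le1: "e k \<le> 1" for k by (simp add: e_def field_simps)
  have e_anti: "e l \<le> e k" if "k \<le> l" for k l using that by (simp add: e_def field_simps)
  have "\<exists>F. finite F \<and> F \<subseteq> I \<and> M - e k < m F" for k
  proof -
    have "M - e k < Sup Ms" using epos[of k] by (simp add: M_def)
    then obtain t where "t \<in> Ms" "M - e k < t" using less_cSupD[OF Msne] by blast
    then show ?thesis by (auto simp: Ms_def)
  qed
  then obtain Fs where Fs: "\<And>k. finite (Fs k) \<and> Fs k \<subseteq> I \<and> M - e k < m (Fs k)" by metis
  define G where "G k = (\<Union>j\<le>k. Fs j)" for k
  have Gfin: "finite (G k)" for k using Fs by (auto simp: G_def)
  have GI: "G k \<subseteq> I" for k using Fs by (auto simp: G_def)
  have Gmono: "G k \<subseteq> G l" if "k \<le> l" for k l using that by (auto simp: G_def intro: le_trans)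
  have mG: "M - e k < m (G k)" for k
    using Fs[of k] m_mono[of "Fs k" "G k", OF _ Gfin GI] by (force simp: G_def)
  have close: "(norm (y1 - y2))\<^sup>2 \<le> 8 * e k * (2 * M + 1)"
    if "y1 \<in> S (G k)" "y2 \<in> S (G k)" "norm y1 < M + e k" "norm y2 < M + e k" for k y1 y2
  proof -
    let ?m = "m (G k)"
    have m0: "?m \<ge> 0" using m_ge0[OF Gfin GI] .
    have mM: "?m \<le> M" using m_M[OF Gfin GI] .
    have "(norm (y1 - y2))\<^sup>2 \<le> 2 * (norm y1)\<^sup>2 + 2 * (norm y2)\<^sup>2 - 4 * ?m\<^sup>2"
      using parallelogram_bound[OF mid[OF that(1,2) GI] m0] .
    also have "\<dots> \<le> 2 * (M + e k)\<^sup>2 + 2 * (M + e k)\<^sup>2 - 4 * ?m\<^sup>2"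
      using that(3,4) by (intro diff_right_mono add_mono mult_left_mono power_mono) auto
    also have "\<dots> = 4 * ((M + e k - ?m) * (M + e k + ?m))" by (simp add: algebra_simps power2_eq_square)
    also have "\<dots> \<le> 4 * ((2 * e k) * (2 * M + 1))"
    proof -
      have a: "0 \<le> M + e k - ?m" "M + e k - ?m \<le> 2 * e k" using mM mG[of k] epos[of k] by auto
      have b: "0 \<le> M + e k + ?m" "M + e k + ?m \<le> 2 * M + 1" using mM m0 e_le1[of k] epos[of k] by auto
      show ?thesis using a b by (intro mult_left_mono mult_mono) auto
    qed
    finally show ?thesis by simp
  qed
  have "\<forall>k. \<exists>y\<in>S (G k). norm y < m (G k) + e k" using m_approx[OF Gfin GI epos] by blast
  then obtain p where p: "\<And>k. p k \<in> S (G k)" "\<And>k. norm (p k) < m (G k) + e k" by metis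
  have p_in: "p l \<in> S (G k)" if "k \<le> l" for k l using p(1)[of l] Santi[OF Gmono[OF that]] by auto
  have p_small: "norm (p l) < M + e k" if "k \<le> l" for k l
    using p(2)[of l] m_M[OF Gfin GI, of l] e_anti[OF that] by linarith
  have p_close: "norm (p k - p l) \<le> sqrt (8 * e k * (2 * M + 1))" if "k \<le> l" for k l
  proof -
    have "(norm (p k - p l))\<^sup>2 \<le> 8 * e k * (2 * M + 1)"
      using close[OF p_in[OF order_refl] p_in[OF that] p_small[OF order_refl] p_small[OF that]] .
    then show ?thesis by (simp add: real_le_rsqrt)
  qed
  have sq0: "(\<lambda>k. sqrt (8 * e k * (2 * M + 1))) \<longlonglongrightarrow> 0"
  proof -
    have "(\<lambda>k. 8 * e k * (2 * M + 1)) \<longlonglongrightarrow> 8 * 0 * (2 * M + 1)"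
      unfolding e_def by (intro tendsto_intros LIMSEQ_inverse_real_of_nat)
    then show ?thesis using tendsto_real_sqrt by fastforce
  qed
  have "Cauchy p"
  proof (rule CauchyI)
    fix r :: real assume r: "r > 0"
    obtain N where N: "\<And>k. k \<ge> N \<Longrightarrow> sqrt (8 * e k * (2 * M + 1)) < r"
      using order_tendstoD(2)[OF sq0 r] unfolding eventually_sequentially by auto
    show "\<exists>N. \<forall>k\<ge>N. \<forall>l\<ge>N. norm (p k - p l) < r"
    proof (intro exI allI impI)
      fix k l assume kl: "k \<ge> N" "l \<ge> N"
      show "norm (p k - p l) < r"
      proof (cases "k \<le> l")
        case True then show ?thesis using p_close[OF True] N[OF kl(1)] by linarith
      next
        case False
        then have "norm (p l - p k) < r" using p_close[of l k] N[OF kl(2)] by linarith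
        then show ?thesis by (simp add: norm_minus_commute)
      qed
    qed
  qed
  then obtain pl where pl: "p \<longlonglongrightarrow> pl" using Cauchy_convergent_iff convergent_def by blast
  have "pl \<in> S0"
    using closed_sequentially[OF S0c _ pl] p(1) by (auto simp: S_def)
  moreover have "pl \<in> K i" if i: "i \<in> I" for i
  proof -
    have "\<forall>k. \<exists>y\<in>S (insert i (G k)). norm y < m (insert i (G k)) + e k"
      using m_approx[of "insert i (G k)" for k] Gfin GI i epos by blast
    then obtain q where q: "\<And>k. q k \<in> S (insert i (G k))" "\<And>k. norm (q k) < m (insert i (G k)) + e k" by metis
    have qK: "q k \<in> K i" for k using q(1)[of k] by (auto simp: S_def)
    have qS: "q k \<in> S (G k)" for k using q(1)[of k] Santi[of "G k" "insert i (G k)"] by auto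
    have qsmall: "norm (q k) < M + e k" for k
      using q(2)[of k] m_M[of "insert i (G k)"] Gfin GI i by fastforce
    have "norm (q k - p k) \<le> sqrt (8 * e k * (2 * M + 1))" for k
      using close[OF qS p(1) qsmall p_small[OF order_refl]] by (simp add: real_le_rsqrt)
    then have "(\<lambda>k. q k - p k) \<longlonglongrightarrow> 0"
      by (intro Lim_null_comparison[OF _ sq0]) auto
    then have "(\<lambda>k. (q k - p k) + p k) \<longlonglongrightarrow> 0 + pl" using pl by (intro tendsto_add)
    then have "q \<longlonglongrightarrow> pl" by simp
    then show ?thesis using closed_sequentially[of "K i" q pl] KI[OF i] qK by auto
  qed
  ultimately show ?thesis by auto
qed

lemma comonotoneD:
  "comonotone \<rho> A \<Longrightarrow> u \<in> A p \<Longrightarrow> v \<in> A q \<Longrightarrow> inner (p - q) (u - v) \<ge> \<rho> * (norm (u - v))\<^sup>2"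
  unfolding comonotone_def by blast

lemma resolvent_uniq:
  fixes A :: "'a::real_inner \<Rightarrow> 'a set"
  assumes co: "comonotone \<rho> A" and eta: "\<eta> > 0" "\<rho> + \<eta> > 0"
    and uv: "u \<in> A p" "v \<in> A q" and eq: "p + \<eta> *\<^sub>R u = q + \<eta> *\<^sub>R v"
  shows "p = q \<and> u = v"
proof -
  have pq: "p - q = \<eta> *\<^sub>R (v - u)" using eq by (simp add: algebra_simps)
  have "\<rho> * (norm (u - v))\<^sup>2 \<le> inner (p - q) (u - v)" using comonotoneD[OF co uv] .
  also have "\<dots> = - \<eta> * (norm (u - v))\<^sup>2" unfolding pq power2_norm_eq_inner
    by (simp add: inner_diff_left inner_diff_right inner_commute algebra_simps)
  finally have "(\<rho> + \<eta>) * (norm (u - v))\<^sup>2 \<le> 0" by (simp add: algebra_simps)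
  then have "(norm (u - v))\<^sup>2 \<le> 0" using eta(2) by (simp add: mult_le_0_iff)
  then have "u = v" by simp
  then show ?thesis using pq by simp
qed

lemma minty_comonotone:
  fixes A :: "'a::{real_inner,complete_space} \<Rightarrow> 'a set"
  assumes mx: "max_comonotone \<rho> A" and eta: "\<eta> > 0" "\<rho> + \<eta> > 0"
  shows "\<exists>p. \<exists>u\<in>A p. x = p + \<eta> *\<^sub>R u"
proof -
  have co: "comonotone \<rho> A" using mx by (simp add: max_comonotone_def)
  define \<mu> where "\<mu> = \<rho> + \<eta>"
  have mu: "\<mu> > 0" using eta by (simp add: \<mu>_def)
  define I where "I = {(q, v). v \<in> A q}"
  define a where "a i = fst i + \<eta> *\<^sub>R snd i" for i :: "'a \<times> 'a"
  define b where "b i = fst i + \<eta> *\<^sub>R snd i - (2 * \<mu>) *\<^sub>R snd i" for i :: "'a \<times> 'a"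
  have lip: "norm (b i - b j) \<le> norm (a i - a j)" if "i \<in> I" "j \<in> I" for i j
  proof -
    obtain q v q' v' where ij: "i = (q, v)" "j = (q', v')" by fastforce
    have vA: "v \<in> A q" "v' \<in> A q'" using that ij by (auto simp: I_def)
    define s where "s = (q + \<eta> *\<^sub>R v) - (q' + \<eta> *\<^sub>R v')"
    have c1: "inner (q - q') (v - v') \<ge> \<rho> * (norm (v - v'))\<^sup>2" using comonotoneD[OF co vA] .
    have "inner s (v - v') = inner (q - q') (v - v') + \<eta> * (norm (v - v'))\<^sup>2"
      unfolding s_def power2_norm_eq_inner by (simp add: inner_diff_left inner_diff_right inner_add_left inner_add_right algebra_simps)
    then have c2: "inner s (v - v') \<ge> \<mu> * (norm (v - v'))\<^sup>2" using c1 by (simp add: \<mu>_def algebra_simps)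
    have bij: "b i - b j = s - (2 * \<mu>) *\<^sub>R (v - v')"
      unfolding ij b_def s_def by (simp add: scaleR_diff_right)
    have aij: "a i - a j = s" unfolding ij a_def s_def by simp
    have "(norm (s - (2 * \<mu>) *\<^sub>R (v - v')))\<^sup>2 = (norm s)\<^sup>2 - 4 * \<mu> * inner s (v - v') + 4 * \<mu>\<^sup>2 * (norm (v - v'))\<^sup>2"
      unfolding power2_norm_eq_inner
      by (simp add: inner_diff_left inner_diff_right inner_commute algebra_simps power2_eq_square)
    also have "\<dots> \<le> (norm s)\<^sup>2"
    proof -
      have "4 * \<mu> * (\<mu> * (norm (v - v'))\<^sup>2) \<le> 4 * \<mu> * inner s (v - v')"
        using c2 mu by (intro mult_left_mono) auto
      then show ?thesis by (simp add: power2_eq_square algebra_simps)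
    qed
    finally have "(norm (b i - b j))\<^sup>2 \<le> (norm (a i - a j))\<^sup>2" unfolding bij aij .
    then show ?thesis by (rule power2_le_imp_le) simp
  qed
  obtain n where n: "\<forall>i\<in>I. norm (n - b i) \<le> norm (x - a i)"
  proof (cases "I = {}")
    case True then show ?thesis using that by blast
  next
    case False
    then obtain i0 where i0: "i0 \<in> I" by auto
    define K where "K i = cball (b i) (norm (x - a i))" for i
    have memK: "y \<in> K i \<longleftrightarrow> norm (y - b i) \<le> norm (x - a i)" for y i
      by (simp add: K_def dist_norm norm_minus_commute)
    have "K i0 \<inter> \<Inter>(K ` I) \<noteq> {}"
    proof (rule fip_hilbert)
      fix F assume F: "finite F" "F \<subseteq> I"
      have lipF: "\<And>i j. i \<in> insert i0 F \<Longrightarrow> j \<in> insert i0 F \<Longrightarrow> norm (b i - b j) \<le> norm (a i - a j)"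
        using F i0 lip by blast
      have "\<exists>n. \<forall>i\<in>insert i0 F. norm (n - b i) \<le> norm (x - a i)"
      proof (rule kirszbraun_finite)
        show "finite (insert i0 F)" using F by simp
      qed (rule lipF)
      then obtain n where nF: "\<forall>i\<in>insert i0 F. norm (n - b i) \<le> norm (x - a i)" by blast
      have "n \<in> K i0 \<inter> \<Inter>(K ` F)" unfolding memK Int_iff Inter_iff
        using nF memK by blast
      then show "K i0 \<inter> \<Inter>(K ` F) \<noteq> {}" by blast
    next
      show "bounded (K i0)" "closed (K i0)" "convex (K i0)" by (simp_all add: K_def)
    next
      fix i assume "i \<in> I"
      show "closed (K i) \<and> convex (K i)" by (simp add: K_def)
    qed
    then obtain n where "n \<in> \<Inter>(K ` I)" by blast
    then have "\<forall>i\<in>I. norm (n - b i) \<le> norm (x - a i)" using memK by blast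
    then show ?thesis by (rule that)
  qed
  define w where "w = (1 / (2 * \<mu>)) *\<^sub>R (x - n)"
  define p0 where "p0 = x - \<eta> *\<^sub>R w"
  have nw: "n = x - (2 * \<mu>) *\<^sub>R w" using mu by (simp add: w_def)
  have key: "inner (p0 - q) (w - v) \<ge> \<rho> * (norm (w - v))\<^sup>2" if vA: "v \<in> A q" for q v
  proof -
    have "(q, v) \<in> I" using vA by (simp add: I_def)
    then have h: "norm (n - b (q, v)) \<le> norm (x - a (q, v))" using n by blast
    define t where "t = x - (q + \<eta> *\<^sub>R v)"
    have e1: "n - b (q, v) = t - (2 * \<mu>) *\<^sub>R (w - v)" unfolding nw b_def t_def by (simp add: algebra_simps)
    have "(norm (t - (2 * \<mu>) *\<^sub>R (w - v)))\<^sup>2 \<le> (norm t)\<^sup>2"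
      using h unfolding e1 by (simp add: a_def t_def power_mono)
    moreover have "(norm (t - (2 * \<mu>) *\<^sub>R (w - v)))\<^sup>2 = (norm t)\<^sup>2 - 4 * \<mu> * inner t (w - v) + 4 * \<mu>\<^sup>2 * (norm (w - v))\<^sup>2"
      unfolding power2_norm_eq_inner
      by (simp add: inner_diff_left inner_diff_right inner_commute algebra_simps power2_eq_square)
    ultimately have "4 * \<mu> * (\<mu> * (norm (w - v))\<^sup>2) \<le> 4 * \<mu> * inner t (w - v)"
      by (simp add: power2_eq_square algebra_simps)
    then have c: "\<mu> * (norm (w - v))\<^sup>2 \<le> inner t (w - v)" using mu by simp
    have "inner t (w - v) = inner (p0 - q) (w - v) + \<eta> * (norm (w - v))\<^sup>2"
      unfolding t_def p0_def power2_norm_eq_inner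
      by (simp add: inner_diff_left inner_diff_right inner_add_left inner_add_right algebra_simps)
    with c show ?thesis by (simp add: \<mu>_def algebra_simps)
  qed
  define A' where "A' y = A y \<union> (if y = p0 then {w} else {})" for y
  have "comonotone \<rho> A'"
    unfolding comonotone_def
  proof (intro allI impI)
    fix y1 u1 y2 u2 assume h1: "u1 \<in> A' y1" and h2: "u2 \<in> A' y2"
    show "inner (y1 - y2) (u1 - u2) \<ge> \<rho> * (norm (u1 - u2))\<^sup>2"
    proof (cases "u1 \<in> A y1")
      case T1: True
      show ?thesis
      proof (cases "u2 \<in> A y2")
        case True then show ?thesis using comonotoneD[OF co T1 True] by simp
      next
        case False
        then have "y2 = p0" "u2 = w" using h2 by (auto simp: A'_def split: if_splits)
        moreover have "inner (y1 - p0) (u1 - w) = inner (p0 - y1) (w - u1)"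
          by (metis inner_minus_left inner_minus_right minus_diff_eq minus_minus)
        moreover have "norm (u1 - w) = norm (w - u1)" by (rule norm_minus_commute)
        ultimately show ?thesis using key[OF T1] by simp
      qed
    next
      case F1: False
      then have e1: "y1 = p0" "u1 = w" using h1 by (auto simp: A'_def split: if_splits)
      show ?thesis
      proof (cases "u2 \<in> A y2")
        case True then show ?thesis using key[OF True] e1 by simp
      next
        case False
        then have "y2 = p0" "u2 = w" using h2 by (auto simp: A'_def split: if_splits)
        then show ?thesis using e1 by simp
      qed
    qed
  qed
  moreover have "\<forall>y. A y \<subseteq> A' y" by (auto simp: A'_def)
  moreover have "\<forall>B. comonotone \<rho> B \<and> (\<forall>x. A x \<subseteq> B x) \<longrightarrow> B = A"
    using mx by (simp add: max_comonotone_def)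
  ultimately have "A' = A" by (metis (no_types, lifting))
  moreover have "w \<in> A' p0" by (simp add: A'_def)
  ultimately have "w \<in> A p0" by simp
  then show ?thesis by (intro exI[of _ p0] bexI[of _ w]) (auto simp: p0_def)
qed

lemma resolvent_props:
  fixes A :: "'a::{real_inner,complete_space} \<Rightarrow> 'a set"
  assumes mx: "max_comonotone \<rho> A" and eta: "\<eta> > 0" "\<rho> + \<eta> > 0"
  shows "yosida A \<eta> x \<in> A (resolvent A \<eta> x) \<and> x = resolvent A \<eta> x + \<eta> *\<^sub>R yosida A \<eta> x"
proof -
  have co: "comonotone \<rho> A" using mx by (simp add: max_comonotone_def)
  have ex1: "\<exists>!p. \<exists>u\<in>A p. x = p + \<eta> *\<^sub>R u"
  proof -
    obtain p u where pu: "u \<in> A p" "x = p + \<eta> *\<^sub>R u" using minty_comonotone[OF mx eta] by blast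
    show ?thesis
    proof (rule ex1I[of _ p])
      show "\<exists>u\<in>A p. x = p + \<eta> *\<^sub>R u" using pu by blast
    next
      fix p' assume "\<exists>u\<in>A p'. x = p' + \<eta> *\<^sub>R u"
      then obtain u' where u': "u' \<in> A p'" "x = p' + \<eta> *\<^sub>R u'" by blast
      show "p' = p" using resolvent_uniq[OF co eta u'(1) pu(1)] u'(2) pu(2) by simp
    qed
  qed
  then have "\<exists>u\<in>A (resolvent A \<eta> x). x = resolvent A \<eta> x + \<eta> *\<^sub>R u"
    unfolding resolvent_def by (rule theI')
  then obtain u where u: "u \<in> A (resolvent A \<eta> x)" "x = resolvent A \<eta> x + \<eta> *\<^sub>R u" by blast
  have "x - resolvent A \<eta> x = \<eta> *\<^sub>R u" using u(2) by (simp add: algebra_simps)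
  then have "yosida A \<eta> x = u" unfolding yosida_def using eta(1) by simp
  then show ?thesis using u by simp
qed

lemma yosida_cocoercive:
  fixes A :: "'a::{real_inner,complete_space} \<Rightarrow> 'a set"
  assumes mx: "max_comonotone \<rho> A" and eta: "\<eta> > 0" "\<rho> + \<eta> > 0"
  shows "inner (x - y) (yosida A \<eta> x - yosida A \<eta> y) \<ge> (\<rho> + \<eta>) * (norm (yosida A \<eta> x - yosida A \<eta> y))\<^sup>2"
proof -
  have co: "comonotone \<rho> A" using mx by (simp add: max_comonotone_def)
  note px = resolvent_props[OF mx eta, of x] and py = resolvent_props[OF mx eta, of y]
  define J1 where "J1 = resolvent A \<eta> x"
  define J2 where "J2 = resolvent A \<eta> y"
  define Y1 where "Y1 = yosida A \<eta> x"
  define Y2 where "Y2 = yosida A \<eta> y"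
  have c: "inner (J1 - J2) (Y1 - Y2) \<ge> \<rho> * (norm (Y1 - Y2))\<^sup>2"
    using comonotoneD[OF co conjunct1[OF px] conjunct1[OF py]] by (simp add: J1_def J2_def Y1_def Y2_def)
  have "x - y = (J1 - J2) + \<eta> *\<^sub>R (Y1 - Y2)" using px py
    by (simp add: J1_def J2_def Y1_def Y2_def algebra_simps)
  then have "inner (x - y) (Y1 - Y2) = inner (J1 - J2) (Y1 - Y2) + \<eta> * (norm (Y1 - Y2))\<^sup>2"
    by (simp add: inner_add_left power2_norm_eq_inner)
  with c show ?thesis by (simp add: Y1_def Y2_def algebra_simps)
qed

lemma yosida_zer:
  fixes A :: "'a::{real_inner,complete_space} \<Rightarrow> 'a set"
  assumes mx: "max_comonotone \<rho> A" and eta: "\<eta> > 0" "\<rho> + \<eta> > 0"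
  shows "yosida A \<eta> l = 0 \<longleftrightarrow> l \<in> zer A"
proof
  have co: "comonotone \<rho> A" using mx by (simp add: max_comonotone_def)
  note pl = resolvent_props[OF mx eta, of l]
  {
    assume "yosida A \<eta> l = 0"
    then have "0 \<in> A (resolvent A \<eta> l)" "l = resolvent A \<eta> l" using pl by auto
    then show "l \<in> zer A" by (simp add: zer_def)
  }
  {
    assume "l \<in> zer A"
    then have z: "0 \<in> A l" by (simp add: zer_def)
    have "l = l + \<eta> *\<^sub>R 0" by simp
    then have "resolvent A \<eta> l = l \<and> yosida A \<eta> l = 0"
      using resolvent_uniq[OF co eta conjunct1[OF pl] z] pl by simp
    then show "yosida A \<eta> l = 0" by simp
  }
qed

definition tailC :: "(nat \<Rightarrow> 'a::real_normed_vector) \<Rightarrow> nat set \<Rightarrow> nat \<Rightarrow> 'a set" where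
  "tailC xs S N = closure (convex hull (xs ` {n\<in>S. N \<le> n}))"

lemma tail_cluster_exists:
  fixes xs :: "nat \<Rightarrow> 'a::{real_inner,complete_space}"
  assumes bdd: "\<And>n. norm (xs n) \<le> R" and S: "infinite S"
  shows "\<exists>l. \<forall>N. l \<in> tailC xs S N"
proof -
  have "cball 0 R \<inter> \<Inter>(tailC xs S ` UNIV) \<noteq> {}"
  proof (rule fip_hilbert)
    fix F :: "nat set" assume F: "finite F" "F \<subseteq> UNIV"
    obtain n where n: "n \<in> S" "Max (insert 0 F) \<le> n"
      using S by (meson infinite_nat_iff_unbounded_le)
    have "xs n \<in> tailC xs S N" if "N \<in> F" for N
    proof -
      have "N \<le> n" using n(2) F(1) that by (meson Max_ge finite_insert insertCI le_trans)
      then have "xs n \<in> xs ` {n\<in>S. N \<le> n}" using n(1) by blast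
      then show ?thesis unfolding tailC_def by (meson hull_inc closure_subset subsetD)
    qed
    moreover have "xs n \<in> cball 0 R" using bdd[of n] by simp
    ultimately show "cball 0 R \<inter> \<Inter>(tailC xs S ` F) \<noteq> {}" by blast
  next
    fix i :: nat assume "i \<in> UNIV"
    show "closed (tailC xs S i) \<and> convex (tailC xs S i)"
      unfolding tailC_def by (simp add: convex_closure convex_convex_hull)
  qed auto
  then show ?thesis by blast
qed

lemma tail_halfspace:
  fixes xs :: "nat \<Rightarrow> 'a::real_inner"
  assumes l: "\<And>N. l \<in> tailC xs S N"
    and ev: "\<And>e. e > 0 \<Longrightarrow> \<exists>N. \<forall>n\<in>S. N \<le> n \<longrightarrow> inner v (xs n) \<le> c + e"
  shows "inner v l \<le> c"
proof (rule field_le_epsilon)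
  fix e :: real assume e: "e > 0"
  obtain N where N: "\<forall>n\<in>S. N \<le> n \<longrightarrow> inner v (xs n) \<le> c + e" using ev[OF e] by blast
  define H where "H = {y. inner v y \<le> c + e}"
  have Hc: "closed H" unfolding H_def by (intro closed_Collect_le continuous_intros)
  have Hv: "convex H" unfolding H_def by (rule convex_halfspace_le)
  have "xs ` {n\<in>S. N \<le> n} \<subseteq> H" using N by (auto simp: H_def)
  then have "convex hull (xs ` {n\<in>S. N \<le> n}) \<subseteq> H" using Hv by (intro hull_minimal)
  then have "tailC xs S N \<subseteq> H" unfolding tailC_def using Hc by (intro closure_minimal)
  then show "inner v l \<le> c + e" using l[of N] by (auto simp: H_def)
qed

lemma tail_halfspace_lim:
  fixes xs :: "nat \<Rightarrow> 'a::real_inner"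
  assumes l: "\<And>N. l \<in> tailC xs S N"
    and lim: "(\<lambda>n. inner v (xs n)) \<longlonglongrightarrow> c"
  shows "inner v l = c"
proof -
  have a: "inner v l \<le> c"
  proof (rule tail_halfspace[OF l])
    fix e :: real assume e: "e > 0"
    obtain N where "\<forall>n\<ge>N. inner v (xs n) < c + e" using order_tendstoD(2)[OF lim, of "c + e"] e
      unfolding eventually_sequentially by auto
    then show "\<exists>N. \<forall>n\<in>S. N \<le> n \<longrightarrow> inner v (xs n) \<le> c + e" by force
  qed
  have b: "inner (-v) l \<le> -c"
  proof (rule tail_halfspace[OF l])
    fix e :: real assume e: "e > 0"
    obtain N where "\<forall>n\<ge>N. inner v (xs n) > c - e" using order_tendstoD(1)[OF lim, of "c - e"] e
      unfolding eventually_sequentially by auto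
    then show "\<exists>N. \<forall>n\<in>S. N \<le> n \<longrightarrow> inner (-v) (xs n) \<le> -c + e" by force
  qed
  from a b show ?thesis by simp
qed

lemma tail_mono: "S' \<subseteq> S \<Longrightarrow> tailC xs S' N \<subseteq> tailC xs S N"
  unfolding tailC_def by (intro closure_mono hull_mono) auto

lemma weak_conv_abstract:
  fixes xs zs :: "nat \<Rightarrow> 'a::{real_inner,complete_space}" and B :: "'a \<Rightarrow> 'a"
  assumes bddx: "\<And>n. norm (xs n) \<le> R" and bddz: "\<And>n. norm (zs n) \<le> R"
    and Zne: "Z \<noteq> {}"
    and lim_dist: "\<And>p. p \<in> Z \<Longrightarrow> convergent (\<lambda>n. (norm (xs n - p))\<^sup>2)"
    and mono: "\<And>u v. inner (u - v) (B u - B v) \<ge> 0"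
    and contB: "continuous_on UNIV B"
    and ZB: "\<And>l. B l = 0 \<Longrightarrow> l \<in> Z"
    and zx: "(\<lambda>n. zs n - xs n) \<longlonglongrightarrow> 0" and Bz: "(\<lambda>n. B (zs n)) \<longlonglongrightarrow> 0"
  shows "\<exists>l\<in>Z. weakly_converges xs l"
proof -
  have clusterZ: "l \<in> Z" if l: "\<And>N. l \<in> tailC xs S N" for S l
  proof -
    have hs: "inner (B y) l \<le> inner (B y) y" for y
    proof (rule tail_halfspace[OF l])
      define \<epsilon> where "\<epsilon> n = inner (zs n - y) (B (zs n)) - inner (zs n - xs n) (B y)" for n
      have ineq: "inner (B y) (xs n) \<le> inner (B y) y + \<epsilon> n" for n
      proof -
        have "inner (zs n - y) (B (zs n) - B y) \<ge> 0" by (rule mono)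
        then show ?thesis unfolding \<epsilon>_def
          by (simp add: inner_diff_left inner_diff_right inner_commute algebra_simps)
      qed
      have e0: "\<epsilon> \<longlonglongrightarrow> 0"
      proof -
        have t1: "(\<lambda>n. inner (zs n - y) (B (zs n))) \<longlonglongrightarrow> 0"
        proof (rule Lim_null_comparison)
          show "\<forall>\<^sub>F n in sequentially. norm (inner (zs n - y) (B (zs n))) \<le> (R + norm y) * norm (B (zs n))"
          proof (intro always_eventually allI)
            fix n
            have "norm (inner (zs n - y) (B (zs n))) \<le> norm (zs n - y) * norm (B (zs n))"
              using Cauchy_Schwarz_ineq2 by simp
            also have "\<dots> \<le> (R + norm y) * norm (B (zs n))"
              using bddz[of n] norm_triangle_ineq4[of "zs n" y] by (intro mult_right_mono) auto
            finally show "norm (inner (zs n - y) (B (zs n))) \<le> (R + norm y) * norm (B (zs n))" .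
          qed
          show "(\<lambda>n. (R + norm y) * norm (B (zs n))) \<longlonglongrightarrow> 0"
            using tendsto_mult[OF tendsto_const tendsto_norm[OF Bz]] by simp
        qed
        have t2: "(\<lambda>n. inner (zs n - xs n) (B y)) \<longlonglongrightarrow> 0"
          using tendsto_inner[OF zx tendsto_const[of "B y"]] by simp
        show ?thesis unfolding \<epsilon>_def using tendsto_diff[OF t1 t2] by simp
      qed
      fix e :: real assume e: "e > 0"
      obtain N where "\<forall>n\<ge>N. \<epsilon> n < e" using order_tendstoD(2)[OF e0 e] unfolding eventually_sequentially by auto
      then show "\<exists>N. \<forall>n\<in>S. N \<le> n \<longrightarrow> inner (B y) (xs n) \<le> inner (B y) y + e"
        using ineq by (metis add_le_cancel_left less_imp_le order.trans)
    qed
    define w where "w = B l"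
    define t where "t k = inverse (real (Suc k))" for k
    have "inner w (B (l - t k *\<^sub>R w)) \<le> 0" for k
    proof -
      have "inner (B (l - t k *\<^sub>R w)) (l - (l - t k *\<^sub>R w)) \<le> 0"
        using hs[of "l - t k *\<^sub>R w"] by (simp add: inner_diff_right)
      then have "t k * inner w (B (l - t k *\<^sub>R w)) \<le> 0" by (simp add: inner_commute)
      moreover have "t k > 0" by (simp add: t_def)
      ultimately show ?thesis by (simp add: mult_le_0_iff)
    qed
    moreover have "(\<lambda>k. inner w (B (l - t k *\<^sub>R w))) \<longlonglongrightarrow> inner w (B (l - 0 *\<^sub>R w))"
    proof -
      have "(\<lambda>k. l - t k *\<^sub>R w) \<longlonglongrightarrow> l - 0 *\<^sub>R w"
        unfolding t_def by (intro tendsto_intros LIMSEQ_inverse_real_of_nat)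
      then have "(\<lambda>k. B (l - t k *\<^sub>R w)) \<longlonglongrightarrow> B (l - 0 *\<^sub>R w)"
        using contB by (intro continuous_on_tendsto_compose[OF contB]) auto
      then show ?thesis by (intro tendsto_intros)
    qed
    ultimately have "inner w (B l) \<le> 0"
      by (intro LIMSEQ_le_const2) auto
    then have "inner (B l) (B l) = 0" using inner_ge_zero[of "B l"] by (simp add: w_def)
    then have "B l = 0" by simp
    then show ?thesis by (rule ZB)
  qed
  have uniq: "l = l'" if l: "\<And>N. l \<in> tailC xs S N" and l': "\<And>N. l' \<in> tailC xs S' N"
    and lZ: "l \<in> Z" and l'Z: "l' \<in> Z" for S S' l l'
  proof -
    obtain c1 where c1: "(\<lambda>n. (norm (xs n - l))\<^sup>2) \<longlonglongrightarrow> c1" using lim_dist[OF lZ] convergent_def by blast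
    obtain c2 where c2: "(\<lambda>n. (norm (xs n - l'))\<^sup>2) \<longlonglongrightarrow> c2" using lim_dist[OF l'Z] convergent_def by blast
    have eq: "inner (l - l') (xs n) = ((norm (xs n - l'))\<^sup>2 - (norm (xs n - l))\<^sup>2 + (norm l)\<^sup>2 - (norm l')\<^sup>2) / 2" for n
      unfolding power2_norm_eq_inner by (simp add: inner_diff_left inner_diff_right inner_commute algebra_simps)
    have lim: "(\<lambda>n. inner (l - l') (xs n)) \<longlonglongrightarrow> (c2 - c1 + (norm l)\<^sup>2 - (norm l')\<^sup>2) / 2"
      unfolding eq by (intro tendsto_intros c1 c2) auto
    have "inner (l - l') l = inner (l - l') l'"
      using tail_halfspace_lim[OF l lim] tail_halfspace_lim[OF l' lim] by simp
    then have "inner (l - l') (l - l') = 0" by (simp add: inner_diff_right)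
    then show ?thesis by simp
  qed
  obtain l where l: "\<And>N. l \<in> tailC xs UNIV N" using tail_cluster_exists[where xs=xs and R=R and S=UNIV] bddx by auto
  have lZ: "l \<in> Z" by (rule clusterZ[OF l])
  have "weakly_converges xs l"
    unfolding weakly_converges_def
  proof (rule allI, rule ccontr)
    fix y assume nt: "\<not> (\<lambda>n. inner (xs n) y) \<longlonglongrightarrow> inner l y"
    then obtain e where e: "e > 0" and fr: "\<forall>N. \<exists>n\<ge>N. \<not> dist (inner (xs n) y) (inner l y) < e"
      unfolding lim_sequentially by (meson not_le)
    define S1 where "S1 = {n. inner y (xs n) \<ge> inner y l + e}"
    define S2 where "S2 = {n. inner (-y) (xs n) \<ge> inner (-y) l + e}"
    have "infinite (S1 \<union> S2)"
      unfolding infinite_nat_iff_unbounded_le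
    proof
      fix N
      obtain n where n: "n \<ge> N" "\<not> dist (inner (xs n) y) (inner l y) < e" using fr by blast
      then have "n \<in> S1 \<union> S2" by (auto simp: S1_def S2_def dist_real_def inner_commute abs_if split: if_splits)
      then show "\<exists>n\<ge>N. n \<in> S1 \<union> S2" using n by blast
    qed
    then have "infinite S1 \<or> infinite S2" by simp
    then obtain v S where vS: "infinite S" "S = {n. inner v (xs n) \<ge> inner v l + e}"
      unfolding S1_def S2_def by blast
    obtain l' where l': "\<And>N. l' \<in> tailC xs S N" using tail_cluster_exists[where xs=xs and R=R and S=S] bddx vS(1) by auto
    have l'Z: "l' \<in> Z" by (rule clusterZ[OF l'])
    have "l' = l" using uniq[OF l' l l'Z lZ] .
    moreover have "inner (-v) l' \<le> - (inner v l + e)"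
    proof (rule tail_halfspace[OF l'])
      fix e' :: real assume "e' > 0"
      then show "\<exists>N. \<forall>n\<in>S. N \<le> n \<longrightarrow> inner (-v) (xs n) \<le> - (inner v l + e) + e'"
        using vS(2) by force
    qed
    ultimately show False using e by simp
  qed
  then show ?thesis using lZ by blast
qed

lemma lyap_conv0:
  fixes a b e :: "nat \<Rightarrow> real"
  assumes a0: "\<And>n. a n \<ge> 0" and b0: "\<And>n. b n \<ge> 0" and e0: "\<And>n. e n \<ge> 0"
    and es: "summable e" and step: "\<And>n. a (Suc n) + b n \<le> a n + e n"
  shows "summable b \<and> convergent a"
proof
  have ind: "(\<Sum>k<n. b k) + a n \<le> a 0 + (\<Sum>k<n. e k)" for n
  proof (induction n)
    case 0 then show ?case by simp
  next
    case (Suc n) then show ?case using step[of n] by simp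
  qed
  have se: "(\<Sum>k<n. e k) \<le> suminf e" for n using es e0 by (intro sum_le_suminf) auto
  show "summable b"
  proof (rule summableI_nonneg_bounded[OF b0])
    fix n show "sum b {..<n} \<le> a 0 + suminf e" using ind[of n] se[of n] a0[of n] by linarith
  qed
  define c where "c n = a n - (\<Sum>k<n. e k)" for n
  have "decseq c" unfolding decseq_Suc_iff c_def using step b0 by (auto simp: algebra_simps) (smt (verit) b0 step)
  moreover have "c n \<ge> - suminf e" for n using a0[of n] se[of n] by (simp add: c_def)
  ultimately obtain L where L: "c \<longlonglongrightarrow> L" by (metis decseq_convergent)
  have "(\<lambda>n. c n + (\<Sum>k<n. e k)) \<longlonglongrightarrow> L + suminf e"
    using L summable_LIMSEQ[OF es] by (intro tendsto_add)
  then show "convergent a" unfolding c_def convergent_def by auto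
qed

lemma lyap_conv:
  fixes a b e :: "nat \<Rightarrow> real"
  assumes a0: "\<And>n. n \<ge> N \<Longrightarrow> a n \<ge> 0" and b0: "\<And>n. n \<ge> N \<Longrightarrow> b n \<ge> 0" and e0: "\<And>n. n \<ge> N \<Longrightarrow> e n \<ge> 0"
    and es: "summable e" and step: "\<And>n. n \<ge> N \<Longrightarrow> a (Suc n) + b n \<le> a n + e n"
  shows "summable b \<and> convergent a"
proof -
  have "summable (\<lambda>n. b (n + N)) \<and> convergent (\<lambda>n. a (n + N))"
  proof (rule lyap_conv0[where e="\<lambda>n. e (n + N)"])
    show "summable (\<lambda>n. e (n + N))" using es by (simp add: summable_iff_shift)
  qed (use a0 b0 e0 step in auto)
  then show ?thesis by (simp add: summable_iff_shift convergent_ignore_initial_segment)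
qed

lemma lim_zero_of_summable_div:
  fixes a :: "nat \<Rightarrow> real"
  assumes a0: "\<And>n. a n \<ge> 0" and lim: "a \<longlonglongrightarrow> L" and s: "summable (\<lambda>n. a n / real n)"
  shows "L = 0"
proof (rule ccontr)
  assume "L \<noteq> 0"
  moreover have "L \<ge> 0" using lim a0 by (intro LIMSEQ_le_const) auto
  ultimately have L: "L > 0" by simp
  have ev: "eventually (\<lambda>n. a n > L / 2) sequentially" using order_tendstoD(1)[OF lim, of "L/2"] L by simp
  have "summable (\<lambda>n. (L / 2) * inverse (real n))"
  proof (rule summable_comparison_test_ev[OF _ s])
    show "\<forall>\<^sub>F n in sequentially. norm (L / 2 * inverse (real n)) \<le> a n / real n"
      using ev
    proof eventually_elim
      case (elim n)
      then show ?case using L by (cases "n = 0") (auto simp: field_simps)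
    qed
  qed
  then have "summable (\<lambda>n. (2 / L) * ((L / 2) * inverse (real n)))" by (rule summable_mult)
  then have "summable (\<lambda>n. inverse (real n))" using L by simp
  then show False using not_summable_harmonic[where 'a=real] by simp
qed

lemma ev_le_lin:
  assumes "(\<lambda>n. f n / real n) \<longlonglongrightarrow> L" "L < M"
  shows "eventually (\<lambda>n. f n \<le> M * real n) sequentially"
proof -
  have "eventually (\<lambda>n. f n / real n < M) sequentially" using order_tendstoD(2)[OF assms] .
  moreover have "eventually (\<lambda>n. n \<ge> 1) sequentially" by (rule eventually_ge_at_top)
  ultimately show ?thesis
  proof eventually_elim
    case (elim n) then show ?case by (simp add: field_simps)
  qed
qed

lemma ev_ge_lin:
  assumes "(\<lambda>n. f n / real n) \<longlonglongrightarrow> L" "M < L"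
  shows "eventually (\<lambda>n. f n \<ge> M * real n) sequentially"
proof -
  have "eventually (\<lambda>n. f n / real n > M) sequentially" using order_tendstoD(1)[OF assms] .
  moreover have "eventually (\<lambda>n. n \<ge> 1) sequentially" by (rule eventually_ge_at_top)
  ultimately show ?thesis
  proof eventually_elim
    case (elim n) then show ?case by (simp add: field_simps)
  qed
qed

lemma ev_abs_lin:
  assumes "(\<lambda>n. f n / real n) \<longlonglongrightarrow> L"
  shows "eventually (\<lambda>n. \<bar>f n\<bar> \<le> (\<bar>L\<bar> + 1) * real n) sequentially"
proof -
  have l1: "L < \<bar>L\<bar> + 1" "-(\<bar>L\<bar> + 1) < L" by auto
  show ?thesis using ev_le_lin[OF assms l1(1)] ev_ge_lin[OF assms l1(2)]
    by eventually_elim (auto simp: abs_le_iff algebra_simps)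
qed

lemma ev_abs_const:
  assumes "(f \<longlongrightarrow> (L::real)) sequentially"
  shows "eventually (\<lambda>n. \<bar>f n\<bar> \<le> \<bar>L\<bar> + 1) sequentially"
proof -
  have l1: "L < \<bar>L\<bar> + 1" "-(\<bar>L\<bar> + 1) < L" by auto
  show ?thesis using order_tendstoD(2)[OF assms l1(1)] order_tendstoD(1)[OF assms l1(2)]
    by eventually_elim auto
qed

lemma nsq3:
  fixes u d g :: "'a::real_inner"
  shows "(norm (a *\<^sub>R u + b *\<^sub>R d + c *\<^sub>R g))\<^sup>2 = a\<^sup>2 * inner u u + b\<^sup>2 * inner d d + c\<^sup>2 * inner g g
     + 2 * a * b * inner u d + 2 * a * c * inner u g + 2 * b * c * inner d g"
  unfolding power2_norm_eq_inner
  by (simp add: inner_add_left inner_add_right inner_commute algebra_simps power2_eq_square)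

lemma E_identity:
  fixes u d g :: "'a::real_inner" and n \<alpha> \<beta> \<gamma> :: real
  assumes n: "n > 0" and ga: "\<gamma> > 0"
  defines "D' \<equiv> (1 - \<alpha> / n) *\<^sub>R d - (\<beta> / n) *\<^sub>R g"
  defines "\<kappa> \<equiv> \<alpha> - 1 - \<gamma>"
  defines "P \<equiv> (n - \<kappa>)\<^sup>2 + \<gamma> * \<kappa>"
  shows "((1/2) * (norm (\<gamma> *\<^sub>R (u + D') + (n + 1 - \<alpha>) *\<^sub>R D'))\<^sup>2 + (\<gamma> * \<kappa> / 2) * (norm (u + D'))\<^sup>2)
       - ((1/2) * (norm (\<gamma> *\<^sub>R u + (n - \<alpha>) *\<^sub>R d))\<^sup>2 + (\<gamma> * \<kappa> / 2) * (norm u)\<^sup>2)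
     = - \<gamma> * \<beta> * inner (u + (n / \<gamma>) *\<^sub>R d) g + (\<beta> * n - P * \<beta> * (n - \<alpha>) / n\<^sup>2) * inner d g
       + (P * \<beta>\<^sup>2 / (2 * n\<^sup>2)) * inner g g + (1/2) * (n - \<alpha>)\<^sup>2 * (P / n\<^sup>2 - 1) * inner d d"
  using n ga unfolding D'_def P_def \<kappa>_def power2_norm_eq_inner
  apply (simp add: inner_add_left inner_add_right inner_diff_left inner_diff_right inner_commute)
  apply (simp add: field_simps power2_eq_square)
  done

lemma W_identity:
  fixes d g h :: "'a::real_inner" and n \<alpha> \<beta> \<gamma> \<mu> :: real
  assumes n: "n > 0" and ga: "\<gamma> > 0"
  defines "D' \<equiv> (1 - \<alpha> / n) *\<^sub>R d - (\<beta> / n) *\<^sub>R g"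
  defines "\<kappa> \<equiv> \<alpha> - 1 - \<gamma>"
  defines "a1 \<equiv> (n + 1) * (n - \<kappa>) / n"
  defines "b1 \<equiv> \<kappa> * (n + 1) * (n - \<alpha>) / n"
  shows "(1/2) * (n + 1)\<^sup>2 * (norm (\<beta> *\<^sub>R (g + h) + \<kappa> *\<^sub>R D'))\<^sup>2 - (1/2) * n\<^sup>2 * (norm (\<beta> *\<^sub>R g + \<kappa> *\<^sub>R d))\<^sup>2
       + \<beta> * (n + 1)\<^sup>2 * (\<gamma> * inner (D' + ((n + 1) / \<gamma>) *\<^sub>R D' - (n / \<gamma>) *\<^sub>R d) h - \<gamma> * \<mu> * (norm h)\<^sup>2)
     = (1/2) * (a1\<^sup>2 - n\<^sup>2) * \<beta>\<^sup>2 * inner g g + (a1 * b1 - \<kappa> * n\<^sup>2) * \<beta> * inner g d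
       + (1/2) * (b1\<^sup>2 - \<kappa>\<^sup>2 * n\<^sup>2) * inner d d - \<beta> * (n + 1)\<^sup>2 * (\<gamma> * \<mu> - \<beta> / 2) * inner h h
       - (\<alpha> * \<beta> * (n + 1)\<^sup>2 / n) * (\<alpha> * inner h d + \<beta> * inner h g)"
  using n ga unfolding D'_def a1_def b1_def \<kappa>_def power2_norm_eq_inner
  apply (simp add: inner_add_left inner_add_right inner_diff_left inner_diff_right inner_commute)
  apply (simp add: field_simps power2_eq_square)
  done

lemma D_identity:
  fixes d g :: "'a::real_inner" and n \<alpha> \<beta> :: real
  assumes n: "n > 0"
  defines "D' \<equiv> (1 - \<alpha> / n) *\<^sub>R d - (\<beta> / n) *\<^sub>R g"
  shows "(n + 1)\<^sup>2 * (norm D')\<^sup>2 - n\<^sup>2 * (norm d)\<^sup>2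
     = ((n + 1)\<^sup>2 * (1 - \<alpha> / n)\<^sup>2 - n\<^sup>2) * inner d d - 2 * (n + 1)\<^sup>2 * (1 - \<alpha> / n) * (\<beta> / n) * inner d g
       + (n + 1)\<^sup>2 * (\<beta> / n)\<^sup>2 * inner g g"
  using n unfolding D'_def power2_norm_eq_inner
  apply (simp add: inner_add_left inner_add_right inner_diff_left inner_diff_right inner_commute)
  apply (simp add: field_simps power2_eq_square)
  done

lemma young_ab:
  fixes K a b e :: real
  assumes "e > 0" "a \<ge> 0" "b \<ge> 0" "K \<ge> 0"
  shows "K * a * b \<le> e * b\<^sup>2 + (K\<^sup>2 / (4 * e)) * a\<^sup>2"
proof -
  have eq: "e * b\<^sup>2 + (K\<^sup>2 / (4 * e)) * a\<^sup>2 - K * a * b = (2 * e * b - K * a)\<^sup>2 / (4 * e)"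
    using assms(1) by (simp add: field_simps power2_eq_square)
  have "(2 * e * b - K * a)\<^sup>2 / (4 * e) \<ge> 0" using assms(1) by simp
  then show ?thesis using eq by linarith
qed

lemma limE_G: "((\<lambda>n::nat. ((real n - k)\<^sup>2 + c * k) * b\<^sup>2 / (2 * (real n)\<^sup>2)) \<longlongrightarrow> b\<^sup>2 / 2) sequentially"
  by (real_asymp simp: algebra_simps)
lemma limE_X: "((\<lambda>n::nat. b * real n - ((real n - k)\<^sup>2 + c * k) * b * (real n - a) / (real n)\<^sup>2) \<longlongrightarrow> b * (2 * k + a)) sequentially"
  by (real_asymp simp: algebra_simps)
lemma limE_D: "((\<lambda>n::nat. ((1/2) * (real n - a)\<^sup>2 * (((real n - k)\<^sup>2 + c * k) / (real n)\<^sup>2 - 1)) / real n) \<longlongrightarrow> - k) sequentially"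
  by (real_asymp simp: algebra_simps)

lemma limW_G: "((\<lambda>n::nat. ((((real n + 1) * (real n - k) / real n)\<^sup>2 - (real n)\<^sup>2) / 2 * b\<^sup>2 + c) / real n) \<longlongrightarrow> (1 - k) * b\<^sup>2) sequentially"
  by (real_asymp simp: algebra_simps)
lemma limW_X: "((\<lambda>n::nat. (((real n + 1) * (real n - k) / real n) * (k * (real n + 1) * (real n - a) / real n) - k * (real n)\<^sup>2) * b / real n) \<longlongrightarrow> b * k * (2 - a - k)) sequentially"
  by (real_asymp simp: algebra_simps)
lemma limW_D: assumes "k > 0" shows "((\<lambda>n::nat. ((1/2) * ((k * (real n + 1) * (real n - a) / real n)\<^sup>2 - k\<^sup>2 * (real n)\<^sup>2) + c) / real n) \<longlongrightarrow> k\<^sup>2 * (1 - a)) sequentially"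
  using assms by (real_asymp simp: field_simps power2_eq_square)
lemma limD_1: "((\<lambda>n::nat. ((real n + 1)\<^sup>2 * (1 - a / real n)\<^sup>2 - (real n)\<^sup>2) / real n) \<longlongrightarrow> 2 * (1 - a)) sequentially"
  by (real_asymp simp: algebra_simps)
lemma limD_2: "((\<lambda>n::nat. (2 * (real n + 1)\<^sup>2 * (1 - a / real n) * (b / real n)) / real n) \<longlongrightarrow> 2 * b) sequentially"
  by (real_asymp simp: algebra_simps)
lemma limD_3: assumes "b > 0" shows "((\<lambda>n::nat. (real n + 1)\<^sup>2 * (b / real n)\<^sup>2) \<longlongrightarrow> b\<^sup>2) sequentially"
  using assms by (real_asymp simp: algebra_simps)

lemma ev_real_ge: "eventually (\<lambda>n. real n \<ge> C) sequentially"
  using filterlim_real_sequentially unfolding filterlim_at_top by blast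

lemma ratio_aux:
  fixes q n b dl a :: real
  assumes "q > 0" "n > 0" "b > 0" "dl > 0"
  shows "(a * b * q / n)\<^sup>2 / (4 * (b * q * dl / 2)) = (a\<^sup>2 * b / (2 * dl)) * (q / n\<^sup>2)"
  using assms by (simp add: field_simps power2_eq_square)

lemma inner_abs_le: "\<bar>inner a b\<bar> \<le> norm a * norm b"
  by (rule Cauchy_Schwarz_ineq2)

locale fastalg =
  fixes X d g zz :: "nat \<Rightarrow> 'a::real_inner" and xs :: 'a and \<alpha> \<beta> \<gamma> \<mu> :: real
  assumes beta: "\<beta> > 0" and mu: "\<mu> > 0" and alpha: "\<alpha> > \<gamma> + 2" and gam: "\<gamma> > \<beta> / (2 * \<mu>)"
    and dX: "\<And>n. d (Suc n) = X (Suc n) - X n"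
    and rec: "\<And>n. n \<ge> 1 \<Longrightarrow> d (Suc n) = (1 - \<alpha> / real n) *\<^sub>R d n - (\<beta> / real n) *\<^sub>R g n"
    and zdef: "\<And>n. zz n = X n + (real n / \<gamma>) *\<^sub>R d n"
    and co1: "\<And>n. inner (zz n - xs) (g n) \<ge> \<mu> * (norm (g n))\<^sup>2"
    and co2: "\<And>n. inner (zz (Suc n) - zz n) (g (Suc n) - g n) \<ge> \<mu> * (norm (g (Suc n) - g n))\<^sup>2"
begin

definition "kap = \<alpha> - 1 - \<gamma>"
definition "del = \<gamma> * \<mu> - \<beta> / 2"
definition "E n = (1/2) * (norm (\<gamma> *\<^sub>R (X n - xs) + (real n - \<alpha>) *\<^sub>R d n))\<^sup>2 + (\<gamma> * kap / 2) * (norm (X n - xs))\<^sup>2"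

lemma gpos: "\<gamma> > 0"
proof -
  have "\<beta> / (2 * \<mu>) > 0" using beta mu by simp
  then show ?thesis using gam by linarith
qed

lemma kap1: "kap > 1" using alpha by (simp add: kap_def)

lemma delpos: "del > 0"
proof -
  have h: "\<beta> < 2 * \<mu> * \<gamma>" using gam mu by (simp add: field_simps)
  then show ?thesis unfolding del_def by (simp add: mult_ac)
qed

lemma E_nonneg: "E n \<ge> 0"
  unfolding E_def using gpos kap1 by (intro add_nonneg_nonneg mult_nonneg_nonneg) auto

lemma E_step_eq:
  assumes n: "n \<ge> 1"
  defines "P \<equiv> (real n - kap)\<^sup>2 + \<gamma> * kap"
  shows "E (Suc n) - E n = - \<gamma> * \<beta> * inner (zz n - xs) (g n)
     + (\<beta> * real n - P * \<beta> * (real n - \<alpha>) / (real n)\<^sup>2) * inner (d n) (g n)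
     + (P * \<beta>\<^sup>2 / (2 * (real n)\<^sup>2)) * inner (g n) (g n)
     + (1/2) * (real n - \<alpha>)\<^sup>2 * (P / (real n)\<^sup>2 - 1) * inner (d n) (d n)"
proof -
  have np: "real n > 0" using n by simp
  have XS: "X (Suc n) - xs = (X n - xs) + d (Suc n)" using dX[of n] by simp
  have zn: "zz n - xs = (X n - xs) + (real n / \<gamma>) *\<^sub>R d n" using zdef[of n] by simp
  have "E (Suc n) - E n =
      ((1/2) * (norm (\<gamma> *\<^sub>R ((X n - xs) + d (Suc n)) + (real n + 1 - \<alpha>) *\<^sub>R d (Suc n)))\<^sup>2 + (\<gamma> * kap / 2) * (norm ((X n - xs) + d (Suc n)))\<^sup>2)
     - ((1/2) * (norm (\<gamma> *\<^sub>R (X n - xs) + (real n - \<alpha>) *\<^sub>R d n))\<^sup>2 + (\<gamma> * kap / 2) * (norm (X n - xs))\<^sup>2)"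
    unfolding E_def XS by (simp add: add.commute)
  then show ?thesis using E_identity[OF np gpos, of "X n - xs" \<alpha> "d n" \<beta> "g n"]
    unfolding rec[OF n] zn P_def kap_def by simp
qed

lemma E_step_le: "eventually (\<lambda>n. E (Suc n) + (kap / 2) * real n * (norm (d n))\<^sup>2 \<le> E n) sequentially"
proof -
  define P where "P n = (real n - kap)\<^sup>2 + \<gamma> * kap" for n
  define cX where "cX n = \<beta> * real n - P n * \<beta> * (real n - \<alpha>) / (real n)\<^sup>2" for n
  define cG where "cG n = P n * \<beta>\<^sup>2 / (2 * (real n)\<^sup>2)" for n
  define cD where "cD n = (1/2) * (real n - \<alpha>)\<^sup>2 * (P n / (real n)\<^sup>2 - 1)" for n
  define K1 where "K1 = \<bar>\<beta> * (2 * kap + \<alpha>)\<bar> + 1"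
  have K1: "K1 \<ge> 0" by (simp add: K1_def)
  have bd: "\<beta> * del > 0" using beta delpos by simp
  have kp: "kap > 0" using kap1 by simp
  have e1: "eventually (\<lambda>n. cG n < \<beta>\<^sup>2 / 2 + \<beta> * del / 2) sequentially"
    using order_tendstoD(2)[OF limE_G[of kap \<gamma> \<beta>], of "\<beta>\<^sup>2 / 2 + \<beta> * del / 2"] bd
    by (simp add: cG_def P_def)
  have e2: "eventually (\<lambda>n. \<bar>cX n\<bar> \<le> K1) sequentially"
    using ev_abs_const[OF limE_X[of \<beta> kap \<gamma> \<alpha>]] by (simp add: cX_def P_def K1_def)
  have e3: "eventually (\<lambda>n. cD n \<le> (- (3/4) * kap) * real n) sequentially"
    using ev_le_lin[OF limE_D[of \<alpha> kap \<gamma>], of "- (3/4) * kap"] kp by (simp add: cD_def P_def)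
  have e4: "eventually (\<lambda>n. real n \<ge> (K1\<^sup>2 / (2 * (\<beta> * del))) * (4 / kap)) sequentially"
    by (rule ev_real_ge)
  have e5: "eventually (\<lambda>n. n \<ge> 1) sequentially" by (rule eventually_ge_at_top)
  show ?thesis using e1 e2 e3 e4 e5
  proof eventually_elim
    case (elim n)
    define G where "G = (norm (g n))\<^sup>2"
    define Dd where "Dd = (norm (d n))\<^sup>2"
    have G0: "G \<ge> 0" and D0: "Dd \<ge> 0" by (simp_all add: G_def Dd_def)
    define I1 where "I1 = - \<gamma> * \<beta> * inner (zz n - xs) (g n)"
    define I2 where "I2 = cX n * inner (d n) (g n)"
    define I3 where "I3 = cG n * G"
    define I4 where "I4 = cD n * Dd"
    define GM where "GM = \<gamma> * \<beta> * \<mu> * G"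
    define bdG where "bdG = \<beta> * del * G"
    define b2G where "b2G = \<beta>\<^sup>2 * G"
    define KDG where "KDG = K1 * norm (d n) * norm (g n)"
    define c0 where "c0 = K1\<^sup>2 / (2 * (\<beta> * del))"
    define A1 where "A1 = kap * real n * Dd"
    have eq: "E (Suc n) - E n = I1 + I2 + I3 + I4"
      using E_step_eq[OF elim(5)] by (simp add: I1_def I2_def I3_def I4_def cX_def cG_def cD_def P_def G_def Dd_def power2_norm_eq_inner)
    have f1: "I1 \<le> - GM"
    proof -
      have "\<gamma> * \<beta> * (\<mu> * G) \<le> \<gamma> * \<beta> * inner (zz n - xs) (g n)"
        using co1[of n] gpos beta by (intro mult_left_mono) (auto simp: G_def)
      then show ?thesis by (simp add: I1_def GM_def algebra_simps)
    qed
    have f2: "I2 \<le> KDG"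
    proof -
      have "cX n * inner (d n) (g n) \<le> \<bar>cX n\<bar> * \<bar>inner (d n) (g n)\<bar>" by (simp add: abs_mult[symmetric])
      also have "\<dots> \<le> K1 * (norm (d n) * norm (g n))"
        using elim(2) inner_abs_le[of "d n" "g n"] by (intro mult_mono) auto
      finally show ?thesis by (simp add: mult.assoc I2_def KDG_def)
    qed
    have f3: "KDG \<le> bdG / 2 + c0 * Dd"
      using young_ab[of "\<beta> * del / 2" "norm (d n)" "norm (g n)" K1] bd K1
      by (simp add: G_def Dd_def KDG_def bdG_def c0_def algebra_simps)
    have f4: "I3 \<le> b2G / 2 + bdG / 2"
    proof -
      have "cG n * G \<le> (\<beta>\<^sup>2 / 2 + \<beta> * del / 2) * G" using elim(1) G0 by (intro mult_right_mono) auto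
      then show ?thesis by (simp add: I3_def b2G_def bdG_def algebra_simps)
    qed
    have f5: "I4 \<le> - (3/4) * A1"
    proof -
      have "cD n * Dd \<le> (- (3/4) * kap) * real n * Dd" using elim(3) D0 by (intro mult_right_mono) auto
      then show ?thesis by (simp add: I4_def A1_def algebra_simps)
    qed
    have f6: "c0 * Dd \<le> A1 / 4"
    proof -
      have "c0 = (c0 * (4 / kap)) * (kap / 4)"
        using kp by simp
      also have "\<dots> \<le> real n * (kap / 4)" using elim(4) kp by (intro mult_right_mono) (auto simp: c0_def)
      finally have "c0 \<le> (kap / 4) * real n" by (simp add: mult.commute)
      then have "c0 * Dd \<le> (kap / 4) * real n * Dd" using D0 by (intro mult_right_mono) auto
      then show ?thesis by (simp add: A1_def)
    qed
    have f7: "GM = bdG + b2G / 2"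
      by (simp add: GM_def bdG_def b2G_def del_def algebra_simps power2_eq_square)
    have "E (Suc n) - E n \<le> - A1 / 2"
      using eq f1 f2 f3 f4 f5 f6 f7 by linarith
    then show ?case by (simp add: A1_def Dd_def)
  qed
qed

lemma E_conv: "summable (\<lambda>n. real n * (norm (d n))\<^sup>2) \<and> convergent E"
proof -
  obtain N where N: "\<And>n. n \<ge> N \<Longrightarrow> E (Suc n) + (kap / 2) * real n * (norm (d n))\<^sup>2 \<le> E n"
    using E_step_le unfolding eventually_sequentially by blast
  have kp: "kap > 0" using kap1 by simp
  have "summable (\<lambda>n. (kap / 2) * real n * (norm (d n))\<^sup>2) \<and> convergent E"
    by (rule lyap_conv[where e="\<lambda>_. 0" and N=N]) (use N E_nonneg kp in auto)
  moreover have "summable (\<lambda>n. (kap / 2) * real n * (norm (d n))\<^sup>2) \<Longrightarrow> summable (\<lambda>n. real n * (norm (d n))\<^sup>2)"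
  proof -
    assume "summable (\<lambda>n. (kap / 2) * real n * (norm (d n))\<^sup>2)"
    then have "summable (\<lambda>n. (2 / kap) * ((kap / 2) * real n * (norm (d n))\<^sup>2))" by (rule summable_mult)
    then show ?thesis using kp by simp
  qed
  ultimately show ?thesis by blast
qed

lemma u_bounded: "\<exists>C. \<forall>n. norm (X n - xs) \<le> C"
proof -
  have "Bseq E" using E_conv convergent_imp_Bseq by blast
  then obtain K where K: "\<And>n. norm (E n) \<le> K" unfolding Bseq_def by blast
  have gk: "\<gamma> * kap / 2 > 0" using gpos kap1 by simp
  have "norm (X n - xs) \<le> sqrt (K / (\<gamma> * kap / 2))" for n
  proof -
    have "(\<gamma> * kap / 2) * (norm (X n - xs))\<^sup>2 \<le> E n" unfolding E_def by simp
    also have "\<dots> \<le> K" using K[of n] by simp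
    finally have "(norm (X n - xs))\<^sup>2 \<le> K / (\<gamma> * kap / 2)" using gk by (simp add: field_simps)
    then show ?thesis by (simp add: real_le_rsqrt)
  qed
  then show ?thesis by blast
qed

definition "W n = (1/2) * (real n)\<^sup>2 * (norm (\<beta> *\<^sub>R g n + kap *\<^sub>R d n))\<^sup>2"

lemma W_nonneg: "W n \<ge> 0" unfolding W_def by simp

lemma alpha_pos: "\<alpha> > 0" using alpha gpos by simp

lemma W_step_le: "eventually (\<lambda>n. W (Suc n) + ((\<beta> * del / 2) * (real n + 1)\<^sup>2 * (norm (g (Suc n) - g n))\<^sup>2
     + ((kap - 1) * \<beta>\<^sup>2 / 2) * real n * (norm (g n))\<^sup>2)
     \<le> W n + (\<bar>(kap\<^sup>2 * (1 - \<alpha>))\<bar> + 1 + (\<bar>\<beta> * kap * (2 - \<alpha> - kap)\<bar> + 1)\<^sup>2 / ((kap - 1) * \<beta>\<^sup>2)) * real n * (norm (d n))\<^sup>2) sequentially"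
proof -
  define a1 where "a1 n = (real n + 1) * (real n - kap) / real n" for n
  define b1 where "b1 n = kap * (real n + 1) * (real n - \<alpha>) / real n" for n
  define cg where "cg n = ((a1 n)\<^sup>2 - (real n)\<^sup>2) / 2 * \<beta>\<^sup>2 + 4 * \<alpha>\<^sup>2 * \<beta>^3 / del" for n
  define cx where "cx n = (a1 n * b1 n - kap * (real n)\<^sup>2) * \<beta>" for n
  define cd where "cd n = (1/2) * ((b1 n)\<^sup>2 - kap\<^sup>2 * (real n)\<^sup>2) + 4 * \<alpha>^4 * \<beta> / del" for n
  define K2 where "K2 = \<bar>\<beta> * kap * (2 - \<alpha> - kap)\<bar> + 1"
  define K3 where "K3 = \<bar>(kap\<^sup>2 * (1 - \<alpha>))\<bar> + 1"
  have kp: "kap > 0" and km: "kap - 1 > 0" using kap1 by auto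
  have K2: "K2 \<ge> 0" by (simp add: K2_def)
  have bd: "\<beta> * del > 0" using beta delpos by simp
  have ap: "\<alpha> > 0" by (rule alpha_pos)
  have e1: "eventually (\<lambda>n. cg n \<le> (- (3/4) * (kap - 1) * \<beta>\<^sup>2) * real n) sequentially"
  proof -
    have "(1 - kap) < - (3/4) * (kap - 1)" using km by (simp add: field_simps)
    from mult_strict_right_mono[OF this, of "\<beta>\<^sup>2"]
    have lt: "(1 - kap) * \<beta>\<^sup>2 < (- (3/4) * (kap - 1) * \<beta>\<^sup>2)" using beta by simp
    show ?thesis unfolding cg_def a1_def by (rule ev_le_lin[OF limW_G lt])
  qed
  have e2: "eventually (\<lambda>n. \<bar>cx n\<bar> \<le> K2 * real n) sequentially"
    unfolding cx_def a1_def b1_def K2_def by (rule ev_abs_lin[OF limW_X])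
  have e3: "eventually (\<lambda>n. cd n \<le> K3 * real n) sequentially"
  proof -
    have lt: "kap\<^sup>2 * (1 - \<alpha>) < K3" by (simp add: K3_def)
    show ?thesis unfolding cd_def b1_def by (rule ev_le_lin[OF limW_D[OF kp] lt])
  qed
  have e5: "eventually (\<lambda>n. n \<ge> 1) sequentially" by (rule eventually_ge_at_top)
  show ?thesis using e1 e2 e3 e5
  proof eventually_elim
    case (elim n)
    have n1: "n \<ge> 1" by (rule elim(4))
    have np: "real n > 0" using n1 by simp
    define h where "h = g (Suc n) - g n"
    define D' where "D' = (1 - \<alpha> / real n) *\<^sub>R d n - (\<beta> / real n) *\<^sub>R g n"
    have dS: "d (Suc n) = D'" unfolding D'_def by (rule rec[OF n1])
    have gS: "g (Suc n) = g n + h" by (simp add: h_def)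
    have zS: "zz (Suc n) - zz n = D' + ((real n + 1) / \<gamma>) *\<^sub>R D' - (real n / \<gamma>) *\<^sub>R d n"
    proof -
      have xs1: "X (Suc n) = X n + D'" using dX[of n] dS by (simp add: algebra_simps)
      have a: "zz (Suc n) = (X n + D') + ((real n + 1) / \<gamma>) *\<^sub>R D'"
        using zdef[of "Suc n"] xs1 dS by (simp add: add.commute)
      show ?thesis unfolding a zdef[of n] by (simp add: algebra_simps)
    qed
    define Q where "Q = \<gamma> * inner (zz (Suc n) - zz n) h - \<gamma> * \<mu> * (norm h)\<^sup>2"
    have Q0: "Q \<ge> 0"
    proof -
      have "\<gamma> * (\<mu> * (norm h)\<^sup>2) \<le> \<gamma> * inner (zz (Suc n) - zz n) h"
        using co2[of n] gpos by (intro mult_left_mono) (auto simp: h_def)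
      then show ?thesis by (simp add: Q_def algebra_simps)
    qed
    define G where "G = (norm (g n))\<^sup>2"
    define Dd where "Dd = (norm (d n))\<^sup>2"
    define H where "H = (norm h)\<^sup>2"
    have G0: "G \<ge> 0" and D0: "Dd \<ge> 0" and H0: "H \<ge> 0" by (simp_all add: G_def Dd_def H_def)
    define T where "T = - (\<alpha> * \<beta> * (real n + 1)\<^sup>2 / real n) * (\<alpha> * inner h (d n) + \<beta> * inner h (g n))"
    define P1 where "P1 = (1/2) * ((a1 n)\<^sup>2 - (real n)\<^sup>2) * \<beta>\<^sup>2"
    define P3 where "P3 = (1/2) * ((b1 n)\<^sup>2 - kap\<^sup>2 * (real n)\<^sup>2)"
    define BH where "BH = \<beta> * (real n + 1)\<^sup>2 * del * H"
    define GD where "GD = cx n * inner (g n) (d n)"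
    define QB where "QB = \<beta> * (real n + 1)\<^sup>2 * Q"
    define A where "A = W (Suc n) - W n"
    have ident: "A + QB = P1 * G + GD + P3 * Dd - BH + T"
    proof -
      have "W (Suc n) - W n + \<beta> * (real n + 1)\<^sup>2 * Q =
        (1/2) * (real n + 1)\<^sup>2 * (norm (\<beta> *\<^sub>R (g n + h) + (\<alpha> - 1 - \<gamma>) *\<^sub>R D'))\<^sup>2 - (1/2) * (real n)\<^sup>2 * (norm (\<beta> *\<^sub>R g n + (\<alpha> - 1 - \<gamma>) *\<^sub>R d n))\<^sup>2
        + \<beta> * (real n + 1)\<^sup>2 * (\<gamma> * inner (D' + ((real n + 1) / \<gamma>) *\<^sub>R D' - (real n / \<gamma>) *\<^sub>R d n) h - \<gamma> * \<mu> * (norm h)\<^sup>2)"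
        unfolding W_def Q_def zS gS dS kap_def by simp
      also have "\<dots> = (1/2) * ((a1 n)\<^sup>2 - (real n)\<^sup>2) * \<beta>\<^sup>2 * inner (g n) (g n) + (a1 n * b1 n - kap * (real n)\<^sup>2) * \<beta> * inner (g n) (d n)
       + (1/2) * ((b1 n)\<^sup>2 - kap\<^sup>2 * (real n)\<^sup>2) * inner (d n) (d n) - \<beta> * (real n + 1)\<^sup>2 * (\<gamma> * \<mu> - \<beta> / 2) * inner h h
       - (\<alpha> * \<beta> * (real n + 1)\<^sup>2 / real n) * (\<alpha> * inner h (d n) + \<beta> * inner h (g n))"
        unfolding D'_def a1_def b1_def kap_def by (rule W_identity[OF np gpos])
      finally show ?thesis
        unfolding A_def QB_def P1_def P3_def BH_def GD_def T_def cx_def del_def G_def Dd_def H_def power2_norm_eq_inner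
        by simp
    qed
    define Y where "Y = \<alpha> * norm (d n) + \<beta> * norm (g n)"
    have Y0: "Y \<ge> 0" using ap beta by (simp add: Y_def)
    define Kt where "Kt = \<alpha> * \<beta> * (real n + 1)\<^sup>2 / real n"
    have Kt0: "Kt \<ge> 0" using ap beta np by (simp add: Kt_def)
    have T1: "T \<le> Kt * Y * norm h"
    proof -
      have "- (\<alpha> * inner h (d n) + \<beta> * inner h (g n)) \<le> \<alpha> * (norm h * norm (d n)) + \<beta> * (norm h * norm (g n))"
      proof -
        have h1: "- inner h (d n) \<le> norm h * norm (d n)" using inner_abs_le[of h "d n"] by linarith
        have h2: "- inner h (g n) \<le> norm h * norm (g n)" using inner_abs_le[of h "g n"] by linarith
        have a: "\<alpha> * (- inner h (d n)) \<le> \<alpha> * (norm h * norm (d n))"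
          by (rule mult_left_mono[OF h1]) (use ap in simp)
        have b: "\<beta> * (- inner h (g n)) \<le> \<beta> * (norm h * norm (g n))"
          by (rule mult_left_mono[OF h2]) (use beta in simp)
        have a': "- (\<alpha> * inner h (d n)) \<le> \<alpha> * (norm h * norm (d n))" using a by simp
        have b': "- (\<beta> * inner h (g n)) \<le> \<beta> * (norm h * norm (g n))" using b by simp
        show ?thesis using a' b' by linarith
      qed
      then have F1: "Kt * (- (\<alpha> * inner h (d n) + \<beta> * inner h (g n))) \<le> Kt * (\<alpha> * (norm h * norm (d n)) + \<beta> * (norm h * norm (g n)))"
        using Kt0 by (rule mult_left_mono)
      have eT: "T = Kt * (- (\<alpha> * inner h (d n) + \<beta> * inner h (g n)))"
        unfolding T_def Kt_def by (simp only: mult_minus_left mult_minus_right)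
      have eY: "Kt * Y * norm h = Kt * (\<alpha> * (norm h * norm (d n)) + \<beta> * (norm h * norm (g n)))"
        by (simp add: Y_def algebra_simps)
      show ?thesis unfolding eT eY by (rule F1)
    qed
    have T2: "Kt * Y * norm h \<le> (\<beta> * (real n + 1)\<^sup>2 * del / 2) * H + (Kt\<^sup>2 / (4 * (\<beta> * (real n + 1)\<^sup>2 * del / 2))) * Y\<^sup>2"
    proof -
      have ep: "\<beta> * (real n + 1)\<^sup>2 * del / 2 > 0" using beta delpos by simp
      show ?thesis using young_ab[OF ep Y0 norm_ge_zero Kt0] by (simp add: H_def)
    qed
    have T3: "Kt\<^sup>2 / (4 * (\<beta> * (real n + 1)\<^sup>2 * del / 2)) \<le> 2 * \<alpha>\<^sup>2 * \<beta> / del"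
    proof -
      have "Kt\<^sup>2 / (4 * (\<beta> * (real n + 1)\<^sup>2 * del / 2)) = (\<alpha>\<^sup>2 * \<beta> / (2 * del)) * ((real n + 1)\<^sup>2 / (real n)\<^sup>2)"
        unfolding Kt_def by (rule ratio_aux) (use np beta delpos in auto)
      also have "\<dots> \<le> (\<alpha>\<^sup>2 * \<beta> / (2 * del)) * 4"
      proof (rule mult_left_mono)
        have "real n + 1 \<le> 2 * real n" using n1 by simp
        then have "(real n + 1)\<^sup>2 \<le> (2 * real n)\<^sup>2" by (intro power_mono) auto
        then show "(real n + 1)\<^sup>2 / (real n)\<^sup>2 \<le> 4" using np by (simp add: field_simps power2_eq_square)
      qed (use beta delpos in simp)
      also have "(\<alpha>\<^sup>2 * \<beta> / (2 * del)) * 4 = 2 * \<alpha>\<^sup>2 * \<beta> / del" by simp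
      finally show ?thesis .
    qed
    have T4: "Y\<^sup>2 \<le> 2 * \<alpha>\<^sup>2 * Dd + 2 * \<beta>\<^sup>2 * G"
    proof -
      have "Y\<^sup>2 \<le> 2 * (\<alpha> * norm (d n))\<^sup>2 + 2 * (\<beta> * norm (g n))\<^sup>2"
        unfolding Y_def by (smt (verit) sum_squares_bound power2_sum zero_le_power2 power2_diff)
      then show ?thesis by (simp add: Dd_def G_def power_mult_distrib)
    qed
    have T5: "T \<le> (\<beta> * (real n + 1)\<^sup>2 * del / 2) * H + (4 * \<alpha>^4 * \<beta> / del) * Dd + (4 * \<alpha>\<^sup>2 * \<beta>^3 / del) * G"
    proof -
      have "(Kt\<^sup>2 / (4 * (\<beta> * (real n + 1)\<^sup>2 * del / 2))) * Y\<^sup>2 \<le> (2 * \<alpha>\<^sup>2 * \<beta> / del) * (2 * \<alpha>\<^sup>2 * Dd + 2 * \<beta>\<^sup>2 * G)"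
        using T3 T4 by (intro mult_mono) (use beta delpos in auto)
      also have "\<dots> = (4 * \<alpha>^4 * \<beta> / del) * Dd + (4 * \<alpha>\<^sup>2 * \<beta>^3 / del) * G"
        using delpos by (simp add: field_simps power2_eq_square power3_eq_cube power4_eq_xxxx)
      finally show ?thesis using T1 T2 by linarith
    qed
    define Ng where "Ng = (kap - 1) * \<beta>\<^sup>2 * real n * G"
    define X1D where "X1D = (K2\<^sup>2 / ((kap - 1) * \<beta>\<^sup>2) * real n) * Dd"
    have X1: "GD \<le> Ng / 4 + X1D"
    proof -
      have "cx n * inner (g n) (d n) \<le> \<bar>cx n\<bar> * \<bar>inner (g n) (d n)\<bar>" by (simp add: abs_mult[symmetric])
      also have "\<dots> \<le> (K2 * real n) * (norm (d n) * norm (g n))"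
        using elim(2) inner_abs_le[of "g n" "d n"] by (intro mult_mono) (auto simp: mult.commute)
      also have "\<dots> \<le> ((kap - 1) * \<beta>\<^sup>2 / 4 * real n) * (norm (g n))\<^sup>2 + ((K2 * real n)\<^sup>2 / (4 * ((kap - 1) * \<beta>\<^sup>2 / 4 * real n))) * (norm (d n))\<^sup>2"
        using young_ab[of "(kap - 1) * \<beta>\<^sup>2 / 4 * real n" "norm (d n)" "norm (g n)" "K2 * real n"] km beta np K2
        by (simp add: mult.assoc)
      also have "(K2 * real n)\<^sup>2 / (4 * ((kap - 1) * \<beta>\<^sup>2 / 4 * real n)) = K2\<^sup>2 / ((kap - 1) * \<beta>\<^sup>2) * real n"
        using np km beta by (simp add: field_simps power2_eq_square)
      finally show ?thesis by (simp add: GD_def Ng_def X1D_def G_def Dd_def)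
    qed
    have C1: "cg n * G \<le> - (3/4) * Ng"
    proof -
      have "cg n * G \<le> (- (3/4) * (kap - 1) * \<beta>\<^sup>2) * real n * G" using elim(1) G0 by (intro mult_right_mono) auto
      also have "\<dots> = - (3/4) * Ng" by (simp only: Ng_def mult.assoc)
      finally show ?thesis .
    qed
    have C3: "cd n * Dd \<le> K3 * real n * Dd" using elim(3) D0 by (intro mult_right_mono) auto
    have cgG: "cg n * G = P1 * G + (4 * \<alpha>\<^sup>2 * \<beta>^3 / del) * G" by (simp add: cg_def P1_def distrib_right)
    have cdD: "cd n * Dd = P3 * Dd + (4 * \<alpha>^4 * \<beta> / del) * Dd" by (simp add: cd_def P3_def distrib_right)
    have QQ: "QB \<ge> 0" using Q0 beta by (simp add: QB_def)
    have T5': "T \<le> BH / 2 + (4 * \<alpha>^4 * \<beta> / del) * Dd + (4 * \<alpha>\<^sup>2 * \<beta>^3 / del) * G"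
      using T5 by (simp add: BH_def)
    have fin: "A \<le> - BH / 2 - Ng / 2 + (K3 * real n * Dd + X1D)"
      using ident QQ T5' X1 C1 C3 cgG cdD by linarith
    have eq1: "BH / 2 = (\<beta> * del / 2) * (real n + 1)\<^sup>2 * (norm (g (Suc n) - g n))\<^sup>2"
      by (simp add: BH_def H_def h_def)
    have eq2: "Ng / 2 = ((kap - 1) * \<beta>\<^sup>2 / 2) * real n * (norm (g n))\<^sup>2" by (simp add: Ng_def G_def)
    have eq3: "K3 * real n * Dd + X1D = (K3 + K2\<^sup>2 / ((kap - 1) * \<beta>\<^sup>2)) * real n * (norm (d n))\<^sup>2"
      by (simp add: X1D_def Dd_def algebra_simps)
    show ?case using fin eq1 eq2 eq3 unfolding A_def K3_def[symmetric] K2_def[symmetric] by linarith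
  qed
qed

lemma W_conv: "summable (\<lambda>n. real n * (norm (g n))\<^sup>2) \<and> summable (\<lambda>n. (real n + 1)\<^sup>2 * (norm (g (Suc n) - g n))\<^sup>2) \<and> convergent W"
proof -
  define K4 where "K4 = \<bar>(kap\<^sup>2 * (1 - \<alpha>))\<bar> + 1 + (\<bar>\<beta> * kap * (2 - \<alpha> - kap)\<bar> + 1)\<^sup>2 / ((kap - 1) * \<beta>\<^sup>2)"
  have km: "kap - 1 > 0" using kap1 by simp
  have K4: "K4 \<ge> 0" unfolding K4_def using km beta by (intro add_nonneg_nonneg divide_nonneg_pos) auto
  obtain N where N: "\<And>n. n \<ge> N \<Longrightarrow> W (Suc n) + ((\<beta> * del / 2) * (real n + 1)\<^sup>2 * (norm (g (Suc n) - g n))\<^sup>2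
     + ((kap - 1) * \<beta>\<^sup>2 / 2) * real n * (norm (g n))\<^sup>2) \<le> W n + K4 * real n * (norm (d n))\<^sup>2"
    using W_step_le unfolding eventually_sequentially K4_def by blast
  have es: "summable (\<lambda>n. K4 * (real n * (norm (d n))\<^sup>2))" using E_conv by (intro summable_mult) auto
  have bd: "\<beta> * del > 0" using beta delpos by simp
  have kb: "(kap - 1) * \<beta>\<^sup>2 > 0" using km beta by simp
  have L: "summable (\<lambda>n. (\<beta> * del / 2) * (real n + 1)\<^sup>2 * (norm (g (Suc n) - g n))\<^sup>2
     + ((kap - 1) * \<beta>\<^sup>2 / 2) * real n * (norm (g n))\<^sup>2) \<and> convergent W"
  proof (rule lyap_conv[where N=N and e="\<lambda>n. K4 * (real n * (norm (d n))\<^sup>2)"])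
    show "summable (\<lambda>n. K4 * (real n * (norm (d n))\<^sup>2))" by (rule es)
  next
    fix n assume "n \<ge> N"
    then show "W (Suc n) + ((\<beta> * del / 2) * (real n + 1)\<^sup>2 * (norm (g (Suc n) - g n))\<^sup>2
     + ((kap - 1) * \<beta>\<^sup>2 / 2) * real n * (norm (g n))\<^sup>2) \<le> W n + K4 * (real n * (norm (d n))\<^sup>2)"
      using N[of n] by (simp add: mult.assoc)
  qed (use W_nonneg K4 bd kb in \<open>auto intro!: add_nonneg_nonneg mult_nonneg_nonneg\<close>)
  have s1: "summable (\<lambda>n. real n * (norm (g n))\<^sup>2)"
  proof -
    have "summable (\<lambda>n. ((kap - 1) * \<beta>\<^sup>2 / 2) * real n * (norm (g n))\<^sup>2)"
      by (rule summable_comparison_test'[OF conjunct1[OF L], of 0]) (use bd kb in auto)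
    then have "summable (\<lambda>n. (2 / ((kap - 1) * \<beta>\<^sup>2)) * (((kap - 1) * \<beta>\<^sup>2 / 2) * real n * (norm (g n))\<^sup>2))"
      by (rule summable_mult)
    moreover have "kap \<noteq> 1" using km by simp
    ultimately show ?thesis using beta by simp
  qed
  have s2: "summable (\<lambda>n. (real n + 1)\<^sup>2 * (norm (g (Suc n) - g n))\<^sup>2)"
  proof -
    have "summable (\<lambda>n. (\<beta> * del / 2) * (real n + 1)\<^sup>2 * (norm (g (Suc n) - g n))\<^sup>2)"
      by (rule summable_comparison_test'[OF conjunct1[OF L], of 0]) (use bd kb in auto)
    then have "summable (\<lambda>n. (2 / (\<beta> * del)) * ((\<beta> * del / 2) * (real n + 1)\<^sup>2 * (norm (g (Suc n) - g n))\<^sup>2))"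
      by (rule summable_mult)
    then show ?thesis using bd beta delpos by simp
  qed
  show ?thesis using s1 s2 L by blast
qed

lemma d_lim: "(\<lambda>n. real n * norm (d n)) \<longlonglongrightarrow> 0"
proof -
  define a where "a n = (real n)\<^sup>2 * (norm (d n))\<^sup>2" for n
  define c1 where "c1 n = (real n + 1)\<^sup>2 * (1 - \<alpha> / real n)\<^sup>2 - (real n)\<^sup>2" for n
  define c2 where "c2 n = 2 * (real n + 1)\<^sup>2 * (1 - \<alpha> / real n) * (\<beta> / real n)" for n
  define c3 where "c3 n = (real n + 1)\<^sup>2 * (\<beta> / real n)\<^sup>2" for n
  define K where "K = (\<bar>2 * (1 - \<alpha>)\<bar> + 1) + (\<bar>2 * \<beta>\<bar> + 1) + (\<bar>\<beta>\<^sup>2\<bar> + 1)"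
  have e1: "eventually (\<lambda>n. \<bar>c1 n\<bar> \<le> (\<bar>2 * (1 - \<alpha>)\<bar> + 1) * real n) sequentially"
    unfolding c1_def by (rule ev_abs_lin[OF limD_1])
  have e2: "eventually (\<lambda>n. \<bar>c2 n\<bar> \<le> (\<bar>2 * \<beta>\<bar> + 1) * real n) sequentially"
    unfolding c2_def by (rule ev_abs_lin[OF limD_2])
  have e3: "eventually (\<lambda>n. \<bar>c3 n\<bar> \<le> \<bar>\<beta>\<^sup>2\<bar> + 1) sequentially"
    unfolding c3_def by (rule ev_abs_const[OF limD_3[OF beta]])
  have e4: "eventually (\<lambda>n. n \<ge> 1) sequentially" by (rule eventually_ge_at_top)
  have step: "eventually (\<lambda>n. a (Suc n) \<le> a n + K * (real n * (norm (d n))\<^sup>2 + real n * (norm (g n))\<^sup>2)) sequentially"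
    using e1 e2 e3 e4
  proof eventually_elim
    case (elim n)
    have n1: "n \<ge> 1" by (rule elim(4))
    have np: "real n > 0" using n1 by simp
    define Dd where "Dd = (norm (d n))\<^sup>2"
    define G where "G = (norm (g n))\<^sup>2"
    have G0: "G \<ge> 0" and D0: "Dd \<ge> 0" by (simp_all add: G_def Dd_def)
    have id: "a (Suc n) - a n = c1 n * Dd - c2 n * inner (d n) (g n) + c3 n * G"
    proof -
      have rs: "real (Suc n) = real n + 1" by simp
      show ?thesis unfolding a_def rec[OF n1] rs using D_identity[OF np, of \<alpha> "d n" \<beta> "g n"]
      by (simp add: c1_def c2_def c3_def Dd_def G_def power2_norm_eq_inner mult.assoc)
    qed
    define k1 where "k1 = \<bar>2 * (1 - \<alpha>)\<bar> + 1"
    define k2 where "k2 = \<bar>2 * \<beta>\<bar> + 1"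
    define k3 where "k3 = \<bar>\<beta>\<^sup>2\<bar> + 1"
    define nD where "nD = real n * Dd"
    define nG where "nG = real n * G"
    have k0: "k1 \<ge> 0" "k2 \<ge> 0" "k3 \<ge> 0" by (simp_all add: k1_def k2_def k3_def)
    have nD0: "nD \<ge> 0" and nG0: "nG \<ge> 0" using D0 G0 np by (simp_all add: nD_def nG_def)
    have t1: "c1 n * Dd \<le> k1 * nD"
    proof -
      have "c1 n * Dd \<le> (k1 * real n) * Dd" using elim(1) D0 unfolding k1_def by (intro mult_right_mono) auto
      then show ?thesis by (simp add: nD_def mult.assoc)
    qed
    have t2: "- c2 n * inner (d n) (g n) \<le> k2 * (nD + nG)"
    proof -
      have "- c2 n * inner (d n) (g n) \<le> \<bar>c2 n\<bar> * \<bar>inner (d n) (g n)\<bar>" by (simp add: abs_mult[symmetric])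
      also have "\<dots> \<le> (k2 * real n) * (norm (d n) * norm (g n))"
        using elim(2) inner_abs_le[of "d n" "g n"] unfolding k2_def by (intro mult_mono) auto
      also have "\<dots> \<le> (k2 * real n) * (Dd + G)"
      proof (rule mult_left_mono)
        have sq: "0 \<le> (norm (d n) - norm (g n))\<^sup>2" by simp
        have "(norm (d n) - norm (g n))\<^sup>2 = Dd + G - 2 * (norm (d n) * norm (g n))"
          unfolding Dd_def G_def by (simp add: power2_diff)
        moreover have "norm (d n) * norm (g n) \<ge> 0" by simp
        ultimately show "norm (d n) * norm (g n) \<le> Dd + G" using sq by linarith
      qed (use k0 np in simp)
      also have "\<dots> = k2 * (nD + nG)" by (simp add: nD_def nG_def algebra_simps)
      finally show ?thesis .
    qed
    have t3: "c3 n * G \<le> k3 * nG"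
    proof -
      have "c3 n * G \<le> k3 * G" using elim(3) G0 unfolding k3_def by (intro mult_right_mono) auto
      also have "\<dots> \<le> k3 * nG" unfolding nG_def using n1 G0 k0
        by (intro mult_left_mono) (auto simp: mult_le_cancel_right1)
      finally show ?thesis .
    qed
    have eqK: "K * (nD + nG) = k1 * nD + k2 * (nD + nG) + k3 * nG + (k1 * nG + k3 * nD)"
      by (simp add: K_def k1_def k2_def k3_def algebra_simps)
    have pos: "k1 * nG + k3 * nD \<ge> 0" using k0 nD0 nG0 by simp
    have "a (Suc n) \<le> a n + K * (nD + nG)"
      using id t1 t2 t3 eqK pos by linarith
    then show ?case by (simp add: Dd_def G_def nD_def nG_def)
  qed
  obtain N where N: "\<And>n. n \<ge> N \<Longrightarrow> a (Suc n) \<le> a n + K * (real n * (norm (d n))\<^sup>2 + real n * (norm (g n))\<^sup>2)"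
    using step unfolding eventually_sequentially by blast
  have K0: "K \<ge> 0" by (simp add: K_def)
  have "summable (\<lambda>n::nat. (0::real)) \<and> convergent a"
  proof (rule lyap_conv[where N=N and e="\<lambda>n. K * (real n * (norm (d n))\<^sup>2 + real n * (norm (g n))\<^sup>2)"])
    show "summable (\<lambda>n. K * (real n * (norm (d n))\<^sup>2 + real n * (norm (g n))\<^sup>2))"
      using E_conv W_conv by (intro summable_mult summable_add) auto
  qed (use N K0 in \<open>auto simp: a_def\<close>)
  then obtain L where L: "a \<longlonglongrightarrow> L" unfolding convergent_def by blast
  have "summable (\<lambda>n. a n / real n)"
  proof -
    have "a n / real n = real n * (norm (d n))\<^sup>2" for n
      by (cases "n = 0") (simp_all add: a_def power2_eq_square)
    then show ?thesis using E_conv by simp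
  qed
  then have L0: "L = 0" using lim_zero_of_summable_div[of a L] L by (simp add: a_def)
  have "(\<lambda>n. sqrt (a n)) \<longlonglongrightarrow> sqrt 0" using L L0 by (intro tendsto_real_sqrt) simp
  moreover have "sqrt (a n) = real n * norm (d n)" for n
    by (simp add: a_def real_sqrt_mult)
  ultimately show ?thesis by simp
qed

lemma sq_sum_le: "((x::real) + y)\<^sup>2 \<le> 2 * x\<^sup>2 + 2 * y\<^sup>2"
proof -
  have "0 \<le> (x - y)\<^sup>2" by simp
  then show ?thesis by (simp add: power2_sum power2_diff)
qed

lemma g_lim: "(\<lambda>n. real n * norm (g n)) \<longlonglongrightarrow> 0"
proof -
  obtain Lw where Lw: "W \<longlonglongrightarrow> Lw" using W_conv convergent_def by blast
  have bnd: "W n / real n \<le> \<beta>\<^sup>2 * (real n * (norm (g n))\<^sup>2) + kap\<^sup>2 * (real n * (norm (d n))\<^sup>2)" for n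
  proof (cases "n = 0")
    case True then show ?thesis by simp
  next
    case False
    have "(norm (\<beta> *\<^sub>R g n + kap *\<^sub>R d n))\<^sup>2 \<le> (norm (\<beta> *\<^sub>R g n) + norm (kap *\<^sub>R d n))\<^sup>2"
      by (intro power_mono norm_triangle_ineq) auto
    also have "\<dots> \<le> 2 * (norm (\<beta> *\<^sub>R g n))\<^sup>2 + 2 * (norm (kap *\<^sub>R d n))\<^sup>2" by (rule sq_sum_le)
    also have "\<dots> = 2 * (\<beta>\<^sup>2 * (norm (g n))\<^sup>2 + kap\<^sup>2 * (norm (d n))\<^sup>2)" by (simp add: power_mult_distrib)
    finally have h: "(norm (\<beta> *\<^sub>R g n + kap *\<^sub>R d n))\<^sup>2 \<le> 2 * (\<beta>\<^sup>2 * (norm (g n))\<^sup>2 + kap\<^sup>2 * (norm (d n))\<^sup>2)" .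
    have "W n / real n = (1/2) * real n * (norm (\<beta> *\<^sub>R g n + kap *\<^sub>R d n))\<^sup>2"
      using False by (simp add: W_def power2_eq_square)
    also have "\<dots> \<le> (1/2) * real n * (2 * (\<beta>\<^sup>2 * (norm (g n))\<^sup>2 + kap\<^sup>2 * (norm (d n))\<^sup>2))"
      by (intro mult_left_mono h) auto
    finally show ?thesis by (simp add: algebra_simps)
  qed
  have "summable (\<lambda>n. W n / real n)"
  proof (rule summable_comparison_test'[of _ 0])
    show "summable (\<lambda>n. \<beta>\<^sup>2 * (real n * (norm (g n))\<^sup>2) + kap\<^sup>2 * (real n * (norm (d n))\<^sup>2))"
      using W_conv E_conv by (intro summable_add summable_mult) auto
    fix n show "norm (W n / real n) \<le> \<beta>\<^sup>2 * (real n * (norm (g n))\<^sup>2) + kap\<^sup>2 * (real n * (norm (d n))\<^sup>2)"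
      using bnd[of n] W_nonneg[of n] by simp
  qed
  then have Lw0: "Lw = 0" using lim_zero_of_summable_div[OF W_nonneg Lw] by simp
  define bd where "bd n = sqrt (4 * W n + 2 * kap\<^sup>2 * (real n * norm (d n))\<^sup>2) / \<beta>" for n
  have bd0: "bd \<longlonglongrightarrow> 0"
  proof -
    have "(\<lambda>n. sqrt (4 * W n + 2 * kap\<^sup>2 * (real n * norm (d n))\<^sup>2) / \<beta>) \<longlonglongrightarrow> sqrt (4 * 0 + 2 * kap\<^sup>2 * 0\<^sup>2) / \<beta>"
      using Lw Lw0 d_lim beta by (intro tendsto_intros) auto
    then show ?thesis by (simp add: bd_def[abs_def])
  qed
  have "norm (real n * norm (g n)) \<le> bd n" for n
  proof -
    have "norm (\<beta> *\<^sub>R g n) \<le> norm (\<beta> *\<^sub>R g n + kap *\<^sub>R d n) + norm (kap *\<^sub>R d n)"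
      by (metis add_diff_cancel norm_triangle_ineq4)
    then have "real n * norm (\<beta> *\<^sub>R g n) \<le> real n * norm (\<beta> *\<^sub>R g n + kap *\<^sub>R d n) + real n * norm (kap *\<^sub>R d n)"
      by (metis distrib_left mult_left_mono of_nat_0_le_iff)
    then have "(real n * norm (\<beta> *\<^sub>R g n))\<^sup>2 \<le> (real n * norm (\<beta> *\<^sub>R g n + kap *\<^sub>R d n) + real n * norm (kap *\<^sub>R d n))\<^sup>2"
      by (intro power_mono) auto
    also have "\<dots> \<le> 2 * (real n * norm (\<beta> *\<^sub>R g n + kap *\<^sub>R d n))\<^sup>2 + 2 * (real n * norm (kap *\<^sub>R d n))\<^sup>2"
      by (rule sq_sum_le)
    also have "\<dots> = 4 * W n + 2 * kap\<^sup>2 * (real n * norm (d n))\<^sup>2"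
      by (simp add: W_def power_mult_distrib)
    finally have "(\<beta> * (real n * norm (g n)))\<^sup>2 \<le> 4 * W n + 2 * kap\<^sup>2 * (real n * norm (d n))\<^sup>2"
      using beta by (simp add: power_mult_distrib mult_ac)
    then have "\<beta> * (real n * norm (g n)) \<le> sqrt (4 * W n + 2 * kap\<^sup>2 * (real n * norm (d n))\<^sup>2)"
      by (simp add: real_le_rsqrt)
    then show ?thesis using beta by (simp add: bd_def field_simps)
  qed
  then show ?thesis by (intro Lim_null_comparison[OF _ bd0]) auto
qed

lemma d_to0: "d \<longlonglongrightarrow> 0"
proof -
  have "norm (d n) \<le> real n * norm (d n)" if "n \<ge> 1" for n
    using that by (simp add: mult_le_cancel_right1)
  then have "eventually (\<lambda>n. norm (d n) \<le> real n * norm (d n)) sequentially"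
    unfolding eventually_sequentially by blast
  then show ?thesis by (intro Lim_null_comparison[OF _ d_lim]) simp
qed

lemma u_conv: "convergent (\<lambda>n. (norm (X n - xs))\<^sup>2)"
proof -
  obtain LE where LE: "E \<longlonglongrightarrow> LE" using E_conv convergent_def by blast
  obtain C where C: "\<And>n. norm (X n - xs) \<le> C" using u_bounded by blast
  define c where "c = (\<gamma>\<^sup>2 + \<gamma> * kap) / 2"
  have cpos: "c > 0"
  proof -
    have "\<gamma> * kap > 0" using gpos kap1 by simp
    moreover have "\<gamma>\<^sup>2 > 0" using gpos by simp
    ultimately have "\<gamma>\<^sup>2 + \<gamma> * kap > 0" by linarith
    then show ?thesis by (simp add: c_def)
  qed
  define R where "R n = \<gamma> * (real n - \<alpha>) * inner (X n - xs) (d n) + (1/2) * (real n - \<alpha>)\<^sup>2 * (norm (d n))\<^sup>2" for n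
  have ER: "E n = c * (norm (X n - xs))\<^sup>2 + R n" for n
    unfolding E_def R_def c_def power2_norm_eq_inner
    apply (simp add: inner_add_left inner_add_right inner_diff_left inner_diff_right inner_commute)
    apply (simp add: field_simps power2_eq_square)
    done
  have R0: "R \<longlonglongrightarrow> 0"
  proof -
    define bnd where "bnd n = \<gamma> * C * (real n * norm (d n) + \<bar>\<alpha>\<bar> * norm (d n)) + ((real n * norm (d n))\<^sup>2 + \<alpha>\<^sup>2 * (norm (d n))\<^sup>2)" for n
    have "bnd \<longlonglongrightarrow> \<gamma> * C * (0 + \<bar>\<alpha>\<bar> * norm (0::'a)) + (0\<^sup>2 + \<alpha>\<^sup>2 * (norm (0::'a))\<^sup>2)"
      unfolding bnd_def using d_lim d_to0 by (intro tendsto_intros) auto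
    then have b0: "bnd \<longlonglongrightarrow> 0" by simp
    have "norm (R n) \<le> bnd n" for n
    proof -
      have an: "\<bar>real n - \<alpha>\<bar> \<le> real n + \<bar>\<alpha>\<bar>" by linarith
      have "\<bar>\<gamma> * (real n - \<alpha>) * inner (X n - xs) (d n)\<bar> \<le> \<gamma> * ((real n + \<bar>\<alpha>\<bar>) * (C * norm (d n)))"
      proof -
        have "\<bar>inner (X n - xs) (d n)\<bar> \<le> C * norm (d n)"
          using inner_abs_le[of "X n - xs" "d n"] C[of n] by (meson mult_right_mono norm_ge_zero order_trans)
        then have "\<bar>real n - \<alpha>\<bar> * \<bar>inner (X n - xs) (d n)\<bar> \<le> (real n + \<bar>\<alpha>\<bar>) * (C * norm (d n))"
          using an by (intro mult_mono) auto
        then show ?thesis using gpos by (simp add: abs_mult)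
      qed
      moreover have "\<bar>(1/2) * (real n - \<alpha>)\<^sup>2 * (norm (d n))\<^sup>2\<bar> \<le> (real n * norm (d n))\<^sup>2 + \<alpha>\<^sup>2 * (norm (d n))\<^sup>2"
      proof -
        have "(real n - \<alpha>)\<^sup>2 \<le> 2 * (real n)\<^sup>2 + 2 * \<alpha>\<^sup>2" using sq_sum_le[of "real n" "-\<alpha>"] by simp
        then have "(real n - \<alpha>)\<^sup>2 * (norm (d n))\<^sup>2 \<le> (2 * (real n)\<^sup>2 + 2 * \<alpha>\<^sup>2) * (norm (d n))\<^sup>2"
          by (intro mult_right_mono) auto
        then show ?thesis by (simp add: algebra_simps power_mult_distrib)
      qed
      moreover have "\<gamma> * ((real n + \<bar>\<alpha>\<bar>) * (C * norm (d n))) = \<gamma> * C * (real n * norm (d n) + \<bar>\<alpha>\<bar> * norm (d n))"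
        by (simp add: algebra_simps)
      moreover have "norm (R n) \<le> \<bar>\<gamma> * (real n - \<alpha>) * inner (X n - xs) (d n)\<bar> + \<bar>(1/2) * (real n - \<alpha>)\<^sup>2 * (norm (d n))\<^sup>2\<bar>"
        unfolding R_def real_norm_def by (rule abs_triangle_ineq)
      ultimately show ?thesis unfolding bnd_def by linarith
    qed
    then show ?thesis by (intro Lim_null_comparison[OF _ b0]) auto
  qed
  have "(\<lambda>n. (E n - R n) / c) \<longlonglongrightarrow> (LE - 0) / c" using LE R0 cpos by (intro tendsto_intros) auto
  moreover have "(E n - R n) / c = (norm (X n - xs))\<^sup>2" for n using ER[of n] cpos by simp
  ultimately show ?thesis unfolding convergent_def by auto
qed

end

theorem mainTheorem4:
  fixes A :: "'a::{real_inner, complete_space} \<Rightarrow> 'a set"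
    and \<rho> \<eta> \<alpha> \<beta> \<gamma> :: real
    and x :: "int \<Rightarrow> 'a"
  assumes maxA: "max_comonotone \<rho> A"
    and zer_ne: "zer A \<noteq> {}"
    and eta: "\<eta> > max (-2 * \<rho>) 0"
    and beta: "\<beta> > 0"
    and alpha: "\<alpha> > \<gamma> + 2"
    and gamma: "\<gamma> > \<beta> / (2 * (\<rho> + \<eta>))"
    and iter: "\<And>n::nat. n \<ge> 1 \<Longrightarrow>
       x (int n + 1) =
         (x (int n) + (1 - \<alpha> / real n) *\<^sub>R (x (int n) - x (int n - 1)))
         - (\<beta> / real n) *\<^sub>R yosida A \<eta> (x (int n) + (real n / \<gamma>) *\<^sub>R (x (int n) - x (int n - 1)))"
  defines "z \<equiv> (\<lambda>n::nat. x (int n) + (real n / \<gamma>) *\<^sub>R (x (int n) - x (int n - 1)))"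
  shows "summable (\<lambda>n::nat. real n * (norm (x (int n) - x (int n - 1)))\<^sup>2)
       \<and> summable (\<lambda>n::nat. real n * (norm (yosida A \<eta> (z n)))\<^sup>2)
       \<and> summable (\<lambda>n::nat. (real n)\<^sup>2 * (norm (yosida A \<eta> (z n) - yosida A \<eta> (z (n + 1))))\<^sup>2)
       \<and> (\<lambda>n::nat. norm (x (int n) - x (int n - 1))) \<in> o[at_top](\<lambda>n. 1 / real n)
       \<and> (\<lambda>n::nat. norm (yosida A \<eta> (z n))) \<in> o[at_top](\<lambda>n. 1 / real n)
       \<and> (\<exists>l \<in> zer A. weakly_converges (\<lambda>n. x (int n)) l)"
proof -
  define \<mu> where "\<mu> = \<rho> + \<eta>"
  have eta0: "\<eta> > 0" using eta by simp
  have mu: "\<mu> > 0" using eta by (auto simp: \<mu>_def)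
  have eta2: "\<rho> + \<eta> > 0" using mu by (simp add: \<mu>_def)
  define B where "B = yosida A \<eta>"
  define X where "X n = x (int n)" for n
  define d where "d n = x (int n) - x (int n - 1)" for n
  define g where "g n = B (z n)" for n
  have coco: "inner (u - v) (B u - B v) \<ge> \<mu> * (norm (B u - B v))\<^sup>2" for u v
    unfolding B_def \<mu>_def by (rule yosida_cocoercive[OF maxA eta0 eta2])
  have Bzer: "B p = 0 \<longleftrightarrow> p \<in> zer A" for p
    unfolding B_def by (rule yosida_zer[OF maxA eta0 eta2])
  have loc: "fastalg X d g z p \<alpha> \<beta> \<gamma> \<mu>" if p: "p \<in> zer A" for p
  proof
    show "\<beta> > 0" by (rule beta)
    show "\<mu> > 0" by (rule mu)
    show "\<alpha> > \<gamma> + 2" by (rule alpha)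
    show "\<gamma> > \<beta> / (2 * \<mu>)" using gamma by (simp add: \<mu>_def)
  next
    fix n show "d (Suc n) = X (Suc n) - X n" by (simp add: d_def X_def)
  next
    fix n :: nat assume n: "n \<ge> 1"
    have "d (Suc n) = x (int n + 1) - x (int n)" by (simp add: d_def add.commute)
    also have "\<dots> = (1 - \<alpha> / real n) *\<^sub>R d n - (\<beta> / real n) *\<^sub>R g n"
      unfolding iter[OF n] by (simp add: d_def g_def B_def z_def)
    finally show "d (Suc n) = (1 - \<alpha> / real n) *\<^sub>R d n - (\<beta> / real n) *\<^sub>R g n" .
  next
    fix n show "z n = X n + (real n / \<gamma>) *\<^sub>R d n" by (simp add: z_def X_def d_def)
  next
    fix n
    have "B p = 0" using Bzer p by simp
    then show "inner (z n - p) (g n) \<ge> \<mu> * (norm (g n))\<^sup>2" using coco[of "z n" p] by (simp add: g_def)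
  next
    fix n show "inner (z (Suc n) - z n) (g (Suc n) - g n) \<ge> \<mu> * (norm (g (Suc n) - g n))\<^sup>2"
      using coco[of "z (Suc n)" "z n"] by (simp add: g_def)
  qed
  obtain p0 where p0: "p0 \<in> zer A" using zer_ne by blast
  note L0 = loc[OF p0]
  have S1: "summable (\<lambda>n::nat. real n * (norm (x (int n) - x (int n - 1)))\<^sup>2)"
    using fastalg.E_conv[OF L0] by (simp add: d_def)
  have S2: "summable (\<lambda>n::nat. real n * (norm (yosida A \<eta> (z n)))\<^sup>2)"
    using fastalg.W_conv[OF L0] by (simp add: g_def B_def)
  have S3: "summable (\<lambda>n::nat. (real n)\<^sup>2 * (norm (yosida A \<eta> (z n) - yosida A \<eta> (z (n + 1))))\<^sup>2)"
  proof (rule summable_comparison_test'[of _ 0])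
    show "summable (\<lambda>n. (real n + 1)\<^sup>2 * (norm (g (Suc n) - g n))\<^sup>2)" using fastalg.W_conv[OF L0] by blast
    fix n :: nat
    have "(real n)\<^sup>2 \<le> (real n + 1)\<^sup>2" by (intro power_mono) auto
    then have "(real n)\<^sup>2 * (norm (g (Suc n) - g n))\<^sup>2 \<le> (real n + 1)\<^sup>2 * (norm (g (Suc n) - g n))\<^sup>2"
      by (intro mult_right_mono) auto
    then show "norm ((real n)\<^sup>2 * (norm (yosida A \<eta> (z n) - yosida A \<eta> (z (n + 1))))\<^sup>2) \<le> (real n + 1)\<^sup>2 * (norm (g (Suc n) - g n))\<^sup>2"
      by (simp add: g_def B_def norm_minus_commute)
  qed
  have smallo: "f \<in> o[at_top](\<lambda>n. 1 / real n)" if lim: "(\<lambda>n. real n * f n) \<longlonglongrightarrow> 0" for f :: "nat \<Rightarrow> real"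
  proof (rule smalloI_tendsto)
    have eq: "(\<lambda>n. f n / (1 / real n)) = (\<lambda>n. real n * f n)"
      by (rule ext) (simp add: mult.commute)
    show "((\<lambda>n. f n / (1 / real n)) \<longlongrightarrow> 0) at_top" unfolding eq by (rule lim)
    show "\<forall>\<^sub>F n in at_top. 1 / real n \<noteq> 0"
      using eventually_ge_at_top[of "1::nat"] by eventually_elim auto
  qed
  have O1: "(\<lambda>n::nat. norm (x (int n) - x (int n - 1))) \<in> o[at_top](\<lambda>n. 1 / real n)"
    using smallo[OF fastalg.d_lim[OF L0]] by (simp add: d_def)
  have O2: "(\<lambda>n::nat. norm (yosida A \<eta> (z n))) \<in> o[at_top](\<lambda>n. 1 / real n)"
    using smallo[OF fastalg.g_lim[OF L0]] by (simp add: g_def B_def)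
  have WC: "\<exists>l \<in> zer A. weakly_converges X l"
  proof -
    obtain C where C: "\<And>n. norm (X n - p0) \<le> C" using fastalg.u_bounded[OF L0] by blast
    have "convergent (\<lambda>n. real n * norm (d n))" using fastalg.d_lim[OF L0] convergent_def by blast
    then have "Bseq (\<lambda>n. real n * norm (d n))" by (rule convergent_imp_Bseq)
    then obtain C2 where C2: "\<And>n. norm (real n * norm (d n)) \<le> C2"
      unfolding Bseq_def by blast
    define R where "R = C + norm p0 + C2 / \<gamma>"
    have gp: "\<gamma> > 0" using fastalg.gpos[OF L0] .
    have bx: "norm (X n) \<le> C + norm p0" for n
      using C[of n] norm_triangle_ineq2[of "X n" p0] by linarith
    have zX: "z n - X n = (real n / \<gamma>) *\<^sub>R d n" for n by (simp add: z_def X_def d_def)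
    have nz: "norm (z n - X n) = (real n * norm (d n)) / \<gamma>" for n
      unfolding zX using gp by simp
    have bz: "norm (z n) \<le> R" for n
    proof -
      have "norm (z n) \<le> norm (X n) + norm (z n - X n)" by (metis add_diff_cancel_left' norm_triangle_ineq diff_add_cancel)
      also have "\<dots> \<le> C + norm p0 + C2 / \<gamma>"
        using bx[of n] C2[of n] gp unfolding nz by (intro add_mono divide_right_mono) auto
      finally show ?thesis by (simp add: R_def)
    qed
    have bx': "norm (X n) \<le> R" for n
    proof -
      have "C2 \<ge> 0" using C2[of 0] norm_ge_zero order_trans by blast
      then have "C2 / \<gamma> \<ge> 0" using gp by simp
      then show ?thesis using bx[of n] unfolding R_def by linarith
    qed
    show ?thesis
    proof (rule weak_conv_abstract[where zs=z and B=B and R=R])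
      show "\<And>n. norm (X n) \<le> R" by (rule bx')
      show "\<And>n. norm (z n) \<le> R" by (rule bz)
      show "zer A \<noteq> {}" by (rule zer_ne)
      show "\<And>p. p \<in> zer A \<Longrightarrow> convergent (\<lambda>n. (norm (X n - p))\<^sup>2)"
        using fastalg.u_conv[OF loc] by blast
      show "\<And>u v. inner (u - v) (B u - B v) \<ge> 0"
        using coco mu by (meson mult_nonneg_nonneg order_trans less_imp_le zero_le_power2)
      show "\<And>l. B l = 0 \<Longrightarrow> l \<in> zer A" using Bzer by blast
      show "continuous_on UNIV B"
      proof (rule lipschitz_on_continuous_on)
        show "(1 / \<mu>)-lipschitz_on UNIV B"
        proof (rule lipschitz_onI)
          fix u v :: 'a
          have "\<mu> * (norm (B u - B v))\<^sup>2 \<le> norm (u - v) * norm (B u - B v)"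
            using coco[of u v] Cauchy_Schwarz_ineq2[of "u - v" "B u - B v"] by linarith
          then have "\<mu> * norm (B u - B v) \<le> norm (u - v)"
            by (cases "norm (B u - B v) = 0") (auto simp: power2_eq_square)
          then show "dist (B u) (B v) \<le> 1 / \<mu> * dist u v" using mu by (simp add: dist_norm field_simps)
        qed (use mu in simp)
      qed
      show "(\<lambda>n. z n - X n) \<longlonglongrightarrow> 0"
      proof (rule Lim_null_comparison[OF _ ])
        show "\<forall>\<^sub>F n in sequentially. norm (z n - X n) \<le> (real n * norm (d n)) / \<gamma>" using nz by simp
        show "(\<lambda>n. (real n * norm (d n)) / \<gamma>) \<longlonglongrightarrow> 0"
          using tendsto_divide[OF fastalg.d_lim[OF L0] tendsto_const[of \<gamma>]] gp by simp
      qed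
      show "(\<lambda>n. B (z n)) \<longlonglongrightarrow> 0"
      proof (rule Lim_null_comparison)
        show "\<forall>\<^sub>F n in sequentially. norm (B (z n)) \<le> real n * norm (g n)"
          using eventually_ge_at_top[of "1::nat"]
          by eventually_elim (auto simp: g_def mult_le_cancel_right1)
        show "(\<lambda>n. real n * norm (g n)) \<longlonglongrightarrow> 0" by (rule fastalg.g_lim[OF L0])
      qed
    qed
  qed
  then have "\<exists>l \<in> zer A. weakly_converges (\<lambda>n. x (int n)) l" by (simp add: X_def[abs_def])
  with S1 S2 S3 O1 O2 show ?thesis by blast
qed

end
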